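(* Let $D\ge1$ and $0\le d\le D$. Let $G=G_1\,\Box\,\cdots\,\Box\,G_D$ be a cartesian product in which exactly $d$ factors are cycle digraphs $C_{n_\mu}$ ($n_\mu\ge3$ arbitrary) and the remaining $D-d$ factors are simple directed paths $P_{n_\mu}$ ($n_\mu\ge2$ arbitrary). Then $$|V|\cdot r-\operatorname{rank}\mathcal D(G)\le r\cdot\prod_{\mu=1}^D\big(\beta_0(G_\mu)+\beta_1(G_\mu)\big)=r\cdot 2^d,$$ equivalently $\dim\ker\mathcal D(G)/r\le 2^d$.
   Context: The cycle digraph $C_n$ ($n\ge3$) has vertex set $\{1,\dots,n\}$ and edges $i\to i+1$ for $1\le i\le n-1$ together with $n\to1$. The simple directed path $P_n$ ($n\ge2$) has vertex set $\{1,\dots,n\}$ and edges $i\to i+1$ for $1\le i\le n-1$. For a directed graph without multiple edges, the anti-symmetrized adjacency matrix $A_{\mathrm{as}}$ is the $|V|\times|V|$ matrix with: - $(A_{\mathrm{as}})_{ij}=1$ if an edge leaves $i$ and enters $j$; - $(A_{\mathrm{as}})_{ij}=-1$ if an edge leaves $j$ and enters $i$; - $(A_{\mathrm{as}})_{ij}=0$ otherwise. Let $\gamma_1,\dots,\gamma_D$ be complex $r\times r$ matrices satisfying $\gamma_\mu\gamma_\nu+\gamma_\nu\gamma_\mu=2\delta_{\mu\nu}\mathbf 1_r$, and set $r=\operatorname{rank}\gamma$. For $G=G_1\Box\cdots\Box G_D$ with $G_\mu$ having $n_\mu$ vertices, $|V|=\prod_\mu n_\mu$ and $$\mathcal D(G)=\sum_{\mu=1}^D\Big(\mathbf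 1_{n_D}\otimes\cdots\otimes\mathbf 1_{n_{\mu+1}}\otimes A_{\mathrm{as}}(G_\mu)\otimes\mathbf 1_{n_{\mu-1}}\otimes\cdots\otimes\mathbf 1_{n_1}\Big)\otimes\gamma_\mu,$$ where $\otimes$ is the Kronecker product and $\mathbf 1_k$ is the $k\times k$ identity. Betti numbers of a factor graph: $\beta_0$ is the number of connected components and $\beta_1=|E|-|V|+\beta_0$. *)

theory Defs
  imports "Jordan_Normal_Form.DL_Rank" "Jordan_Normal_Form.Matrix_Kernel"
begin

text \<open>Digraphs on the vertex set {0..<n} (0-indexed version of {1..n}), given by an edge set.\<close>

definition cycle_edges :: "nat \<Rightarrow> (nat \<times> nat) set" where
  "cycle_edges n = {(i, (i + 1) mod n) | i. i < n}"

definition path_edges :: "nat \<Rightarrow> (nat \<times> nat) set" where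
  "path_edges n = {(i, i + 1) | i. i + 1 < n}"

definition A_as :: "nat \<Rightarrow> (nat \<times> nat) set \<Rightarrow> complex mat" where
  "A_as n E = mat n n (\<lambda>(i, j). if (i, j) \<in> E then 1 else if (j, i) \<in> E then -1 else 0)"

definition kron :: "'a :: times mat \<Rightarrow> 'a mat \<Rightarrow> 'a mat" where
  "kron A B = mat (dim_row A * dim_row B) (dim_col A * dim_col B)
     (\<lambda>(i, j). A $$ (i div dim_row B, j div dim_col B) * B $$ (i mod dim_row B, j mod dim_col B))"

definition conn_rel :: "nat \<Rightarrow> (nat \<times> nat) set \<Rightarrow> (nat \<times> nat) set" where
  "conn_rel n E = (E \<union> E\<inverse>)\<^sup>* \<inter> ({0..<n} \<times> {0..<n})"

definition beta0 :: "nat \<Rightarrow> (nat \<times> nat) set \<Rightarrow> nat" where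
  "beta0 n E = card ({0..<n} // conn_rel n E)"

definition beta1 :: "nat \<Rightarrow> (nat \<times> nat) set \<Rightarrow> int" where
  "beta1 n E = int (card E) - int n + int (beta0 n E)"

definition factor_edges :: "(nat \<Rightarrow> bool) \<Rightarrow> (nat \<Rightarrow> nat) \<Rightarrow> nat \<Rightarrow> (nat \<times> nat) set" where
  "factor_edges cyc n \<mu> = (if cyc \<mu> then cycle_edges (n \<mu>) else path_edges (n \<mu>))"

text \<open>Dirac operator of the cartesian product G_1 box ... box G_D (factors indexed 0..<D):
  sum over mu of (1_{n_{D}} x ... x 1_{n_{mu+1}} x A_as(G_mu) x 1_{n_{mu-1}} x ... x 1_{n_1}) x gamma_mu.\<close>
definition dirac :: "nat \<Rightarrow> (nat \<Rightarrow> bool) \<Rightarrow> (nat \<Rightarrow> nat) \<Rightarrow> nat \<Rightarrow> (nat \<Rightarrow> complex mat) \<Rightarrow> complex mat" where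
  "dirac D cyc n r \<gamma> =
     (let N = (\<Prod>\<nu><D. n \<nu>);
          T = (\<lambda>\<mu>. kron (kron (kron (1\<^sub>m (\<Prod>\<nu>\<in>{Suc \<mu>..<D}. n \<nu>))
                                    (A_as (n \<mu>) (factor_edges cyc n \<mu>)))
                              (1\<^sub>m (\<Prod>\<nu><\<mu>. n \<nu>)))
                        (\<gamma> \<mu>))
      in mat (N * r) (N * r) (\<lambda>ij. \<Sum>\<mu><D. T \<mu> $$ ij))"

end

theory Submission
  imports Defs
begin
lemma sum_split_prod:
  fixes f :: "nat \<Rightarrow> 'a::comm_monoid_add"
  shows "(\<Sum>j<a*b. f j) = (\<Sum>l<a. \<Sum>p<b. f (l*b+p))"
proof (induction a)
  case 0 then show ?case by simp
next
  case (Suc a)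
  have "(\<Sum>j<Suc a * b. f j) = (\<Sum>j<a*b. f j) + (\<Sum>j\<in>{a*b..<a*b+b}. f j)"
    by (simp add: add.commute sum.atLeastLessThan_concat[symmetric] lessThan_atLeast0 flip: sum.atLeastLessThan_concat)
  also have "(\<Sum>j\<in>{a*b..<a*b+b}. f j) = (\<Sum>p<b. f (a*b+p))"
    using sum.shift_bounds_nat_ivl[of f 0 "a*b" b] by (simp add: lessThan_atLeast0 add.commute)
  finally show ?case using Suc by simp
qed

lemma sum_split_prod0:
  fixes f :: "nat \<Rightarrow> 'a::comm_monoid_add"
  shows "(\<Sum>j\<in>{0..<a*b}. f j) = (\<Sum>l\<in>{0..<a}. \<Sum>p\<in>{0..<b}. f (l*b+p))"
  using sum_split_prod[of f a b] by (simp add: atLeast0LessThan)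

lemma mv_entry:
  assumes "A \<in> carrier_mat nr nc" "v \<in> carrier_vec nc" "i < nr"
  shows "(A *\<^sub>v v) $ i = (\<Sum>j\<in>{0..<nc}. A $$ (i,j) * v $ j)"
  using assms by (auto simp: scalar_prod_def intro!: sum.cong)

lemma mm_entry:
  assumes "A \<in> carrier_mat nr n" "B \<in> carrier_mat n nc" "i < nr" "j < nc"
  shows "(A * B) $$ (i,j) = (\<Sum>k\<in>{0..<n}. A $$ (i,k) * B $$ (k,j))"
  using assms by (auto simp: scalar_prod_def intro!: sum.cong)

lemma kron_dims[simp]:
  "dim_row (kron A B) = dim_row A * dim_row B"
  "dim_col (kron A B) = dim_col A * dim_col B"
  unfolding kron_def by simp_all
lemma kron_carrier:
  "A \<in> carrier_mat a b \<Longrightarrow> B \<in> carrier_mat c d \<Longrightarrow> kron A B \<in> carrier_mat (a*c) (b*d)"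
  unfolding carrier_mat_def by simp
lemma kron_index:
  "i < dim_row A * dim_row B \<Longrightarrow> j < dim_col A * dim_col B \<Longrightarrow>
   kron A B $$ (i,j) = A $$ (i div dim_row B, j div dim_col B) * B $$ (i mod dim_row B, j mod dim_col B)"
  unfolding kron_def by simp

lemma div_mod_aux:
  fixes i b c :: nat
  assumes "i < a * (b * c)"
  shows "i div (b*c) = i div c div b" "i mod (b*c) div c = i div c mod b" "i mod (b*c) mod c = i mod c"
proof -
  show "i div (b*c) = i div c div b" by (metis div_mult2_eq mult.commute)
  have c: "c > 0" using assms by (cases "c = 0") auto
  have e: "i mod (b*c) = c * (i div c mod b) + i mod c" by (metis mod_mult2_eq mult.commute)
  show "i mod (b*c) div c = i div c mod b" using c unfolding e by simp
  show "i mod (b*c) mod c = i mod c" by (simp add: mod_mod_cancel)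
qed

lemma kron_assoc: fixes A B C :: "'a::semigroup_mult mat"
  shows "kron (kron A B) C = kron A (kron B C)"
proof (rule eq_matI)
  fix i j assume i: "i < dim_row (kron A (kron B C))" and j: "j < dim_col (kron A (kron B C))"
  have i': "i < dim_row A * (dim_row B * dim_row C)" using i by simp
  have j': "j < dim_col A * (dim_col B * dim_col C)" using j by simp
  have i2: "i div dim_row C < dim_row A * dim_row B"
    using i' by (intro less_mult_imp_div_less) (simp add: mult.assoc)
  have j2: "j div dim_col C < dim_col A * dim_col B"
    using j' by (intro less_mult_imp_div_less) (simp add: mult.assoc)
  have i3: "i mod (dim_row B * dim_row C) < dim_row B * dim_row C"
    using i' by (intro mod_less_divisor) (cases "dim_row B * dim_row C"; simp)
  have j3: "j mod (dim_col B * dim_col C) < dim_col B * dim_col C"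
    using j' by (intro mod_less_divisor) (cases "dim_col B * dim_col C"; simp)
  have eq1: "kron (kron A B) C $$ (i, j) = kron A B $$ (i div dim_row C, j div dim_col C) * C $$ (i mod dim_row C, j mod dim_col C)"
    using i' j' by (intro kron_index) (simp_all add: mult.assoc)
  have eq2: "kron A B $$ (i div dim_row C, j div dim_col C) = A $$ (i div dim_row C div dim_row B, j div dim_col C div dim_col B) * B $$ (i div dim_row C mod dim_row B, j div dim_col C mod dim_col B)"
    using i2 j2 by (rule kron_index)
  have eq3: "kron A (kron B C) $$ (i, j) = A $$ (i div dim_row (kron B C), j div dim_col (kron B C)) * kron B C $$ (i mod dim_row (kron B C), j mod dim_col (kron B C))"
    by (rule kron_index) (use i' j' in simp_all)
  have eq4: "kron B C $$ (i mod (dim_row B * dim_row C), j mod (dim_col B * dim_col C)) = B $$ (i mod (dim_row B * dim_row C) div dim_row C, j mod (dim_col B * dim_col C) div dim_col C) * C $$ (i mod (dim_row B * dim_row C) mod dim_row C, j mod (dim_col B * dim_col C) mod dim_col C)"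
    using i3 j3 by (intro kron_index) simp_all
  show "kron (kron A B) C $$ (i, j) = kron A (kron B C) $$ (i, j)"
    unfolding eq1 eq2 eq3 kron_dims eq4 div_mod_aux[OF i'] div_mod_aux[OF j'] by (simp only: mult.assoc)
qed (auto simp: mult.assoc)

lemma kron_one_one: "kron (1\<^sub>m a) (1\<^sub>m b) = (1\<^sub>m (a*b) :: 'a::semiring_1 mat)"
proof (rule eq_matI)
  fix i j assume i: "i < dim_row (1\<^sub>m (a*b) :: 'a mat)" and j: "j < dim_col (1\<^sub>m (a*b) :: 'a mat)"
  then have ij: "i < a*b" "j < a*b" by auto
  then have b: "b > 0" by (cases "b = 0") auto
  have "i div b < a" "j div b < a" using ij b by (simp_all add: div_less_iff_less_mult mult.commute)
  moreover have "(i div b = j div b \<and> i mod b = j mod b) = (i = j)"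
    by (metis div_mult_mod_eq)
  ultimately show "kron (1\<^sub>m a) (1\<^sub>m b) $$ (i, j) = (1\<^sub>m (a*b) :: 'a mat) $$ (i, j)"
    using ij b by (auto simp: kron_index)
qed auto

lemma kron_one_left: "kron (1\<^sub>m 1) A = (A :: 'a::semiring_1 mat)"
  by (rule eq_matI) (auto simp: kron_index)

lemma kron_mult:
  fixes A C :: "'a::comm_ring_1 mat"
  assumes A: "A \<in> carrier_mat a b" and B: "B \<in> carrier_mat c d"
    and C: "C \<in> carrier_mat b e" and D: "D \<in> carrier_mat d f"
  shows "kron A B * kron C D = kron (A * C) (B * D)"
proof (rule eq_matI)
  fix i j assume i: "i < dim_row (kron (A * C) (B * D))" and j: "j < dim_col (kron (A * C) (B * D))"
  have i': "i < a * c" and j': "j < e * f" using i j A B C D by auto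
  have c: "c > 0" using i' by (cases c) auto
  have f: "f > 0" using j' by (cases f) auto
  have id: "i div c < a" "i mod c < c" "j div f < e" "j mod f < f"
    using i' j' c f by (auto simp: div_less_iff_less_mult mult.commute)
  have "(kron A B * kron C D) $$ (i,j) = (\<Sum>k\<in>{0..<b*d}. kron A B $$ (i,k) * kron C D $$ (k,j))"
    by (rule mm_entry[OF kron_carrier[OF A B] kron_carrier[OF C D] i' j'])
  also have "\<dots> = (\<Sum>l\<in>{0..<b}. \<Sum>p\<in>{0..<d}. kron A B $$ (i,l*d+p) * kron C D $$ (l*d+p,j))"
    by (rule sum_split_prod0)
  also have "\<dots> = (\<Sum>l\<in>{0..<b}. \<Sum>p\<in>{0..<d}. (A $$ (i div c, l) * C $$ (l, j div f)) * (B $$ (i mod c, p) * D $$ (p, j mod f)))"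
  proof (intro sum.cong refl)
    fix l p assume l: "l \<in> {0..<b}" and p: "p \<in> {0..<d}"
    have "l*d+p < (l+1)*d" using p by simp
    also have "\<dots> \<le> b*d" using l by (intro mult_le_mono1) simp
    finally have lp: "l*d+p < b*d" .
    show "kron A B $$ (i, l * d + p) * kron C D $$ (l * d + p, j) = A $$ (i div c, l) * C $$ (l, j div f) * (B $$ (i mod c, p) * D $$ (p, j mod f))"
      using A B C D i' j' lp p by (simp add: kron_index algebra_simps)
  qed
  also have "\<dots> = (\<Sum>l\<in>{0..<b}. A $$ (i div c, l) * C $$ (l, j div f)) * (\<Sum>p\<in>{0..<d}. B $$ (i mod c, p) * D $$ (p, j mod f))"
    by (rule sum_product[symmetric])
  also have "\<dots> = (A * C) $$ (i div c, j div f) * (B * D) $$ (i mod c, j mod f)"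
    by (simp only: mm_entry[OF A C id(1) id(3)] mm_entry[OF B D id(2) id(4)])
  also have "\<dots> = kron (A * C) (B * D) $$ (i,j)"
    using A B C D i' j' by (subst kron_index) auto
  finally show "(kron A B * kron C D) $$ (i,j) = kron (A * C) (B * D) $$ (i,j)" .
qed (use A B C D in auto)

lemma idx_lt: "k < (a::nat) \<Longrightarrow> i < M \<Longrightarrow> k*M+i < a*M"
proof -
  assume "k < a" "i < M"
  then have "k*M+i < (k+1)*M" by simp
  also have "\<dots> \<le> a*M" using \<open>k < a\<close> by (intro mult_le_mono1) simp
  finally show ?thesis .
qed

lemma kron_mult_vec:
  fixes A :: "'a::comm_ring_1 mat"
  assumes A: "A \<in> carrier_mat a a'" and B: "B \<in> carrier_mat M M'" and v: "v \<in> carrier_vec (a'*M')"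
    and k: "k < a" and i: "i < M"
  shows "(kron A B *\<^sub>v v) $ (k*M+i) = (\<Sum>l\<in>{0..<a'}. \<Sum>p\<in>{0..<M'}. A $$ (k,l) * B $$ (i,p) * v $ (l*M'+p))"
proof -
  have "(kron A B *\<^sub>v v) $ (k*M+i) = (\<Sum>j\<in>{0..<a'*M'}. kron A B $$ (k*M+i,j) * v $ j)"
    by (rule mv_entry[OF kron_carrier[OF A B] v idx_lt[OF k i]])
  also have "\<dots> = (\<Sum>l\<in>{0..<a'}. \<Sum>p\<in>{0..<M'}. kron A B $$ (k*M+i,l*M'+p) * v $ (l*M'+p))"
    by (rule sum_split_prod0)
  also have "\<dots> = (\<Sum>l\<in>{0..<a'}. \<Sum>p\<in>{0..<M'}. A $$ (k,l) * B $$ (i,p) * v $ (l*M'+p))"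
  proof (intro sum.cong refl)
    fix l p assume l: "l \<in> {0..<a'}" and p: "p \<in> {0..<M'}"
    have lp: "l*M'+p < a'*M'" using l p idx_lt by auto
    have "kron A B $$ (k*M+i,l*M'+p) = A $$ ((k*M+i) div M, (l*M'+p) div M') * B $$ ((k*M+i) mod M, (l*M'+p) mod M')"
      using A B idx_lt[OF k i] lp by (subst kron_index) auto
    also have "\<dots> = A $$ (k,l) * B $$ (i,p)" using i p by simp
    finally show "kron A B $$ (k*M+i,l*M'+p) * v $ (l*M'+p) = A $$ (k,l) * B $$ (i,p) * v $ (l*M'+p)" by simp
  qed
  finally show ?thesis .
qed

lemma sum_sym_cancel:
  fixes a :: "nat \<Rightarrow> nat \<Rightarrow> complex"
  assumes "\<And>\<mu> \<nu>. \<mu> < D \<Longrightarrow> \<nu> < D \<Longrightarrow> \<mu> \<noteq> \<nu> \<Longrightarrow> a \<mu> \<nu> + a \<nu> \<mu> = 0"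
  shows "(\<Sum>\<mu><D. \<Sum>\<nu><D. a \<mu> \<nu>) = (\<Sum>\<mu><D. a \<mu> \<mu>)"
proof -
  let ?S = "(\<Sum>\<mu><D. \<Sum>\<nu><D. a \<mu> \<nu>)"
  have sw: "?S = (\<Sum>\<mu><D. \<Sum>\<nu><D. a \<nu> \<mu>)" by (rule sum.swap)
  have "2 * ?S = (\<Sum>\<mu><D. \<Sum>\<nu><D. a \<mu> \<nu> + a \<nu> \<mu>)"
    by (subst mult_2, subst (2) sw) (simp add: sum.distrib)
  also have "\<dots> = (\<Sum>\<mu><D. \<Sum>\<nu><D. if \<nu> = \<mu> then 2 * a \<mu> \<mu> else 0)"
    by (intro sum.cong refl) (use assms in auto)
  also have "\<dots> = 2 * (\<Sum>\<mu><D. a \<mu> \<mu>)"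
    by (simp add: sum_distrib_left)
  finally show ?thesis by simp
qed

lemma dirac_mat_vec:
  fixes T :: "nat \<Rightarrow> complex mat"
  assumes T: "\<And>\<mu>. \<mu> < D \<Longrightarrow> T \<mu> \<in> carrier_mat m m" and w: "w \<in> carrier_vec m"
  shows "mat m m (\<lambda>ij. \<Sum>\<mu><D. T \<mu> $$ ij) *\<^sub>v w = vec m (\<lambda>i. \<Sum>\<mu><D. (T \<mu> *\<^sub>v w) $ i)"
proof (rule eq_vecI)
  fix i assume "i < dim_vec (vec m (\<lambda>i. \<Sum>\<mu><D. (T \<mu> *\<^sub>v w) $ i))"
  then have i: "i < m" by simp
  have "(mat m m (\<lambda>ij. \<Sum>\<mu><D. T \<mu> $$ ij) *\<^sub>v w) $ i = (\<Sum>j\<in>{0..<m}. (\<Sum>\<mu><D. T \<mu> $$ (i,j)) * w $ j)"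
    using mv_entry[OF _ w i, of "mat m m (\<lambda>ij. \<Sum>\<mu><D. T \<mu> $$ ij)"] i by simp
  also have "\<dots> = (\<Sum>\<mu><D. \<Sum>j\<in>{0..<m}. T \<mu> $$ (i,j) * w $ j)"
    by (simp add: sum_distrib_right sum.swap[of _ "{0..<m}"])
  also have "\<dots> = (\<Sum>\<mu><D. (T \<mu> *\<^sub>v w) $ i)"
    by (intro sum.cong refl) (simp add: mv_entry[OF T w i])
  finally show "(mat m m (\<lambda>ij. \<Sum>\<mu><D. T \<mu> $$ ij) *\<^sub>v w) $ i = vec m (\<lambda>i. \<Sum>\<mu><D. (T \<mu> *\<^sub>v w) $ i) $ i"
    using i by simp
qed simp

lemma mat_vec_sum_entry:
  fixes T :: "complex mat"
  assumes T: "T \<in> carrier_mat m m" and i: "i < m"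
    and W: "\<And>\<nu>. \<nu> < D \<Longrightarrow> W \<nu> \<in> carrier_vec m"
  shows "(T *\<^sub>v vec m (\<lambda>j. \<Sum>\<nu><D. W \<nu> $ j)) $ i = (\<Sum>\<nu><D. (T *\<^sub>v W \<nu>) $ i)"
proof -
  have "(T *\<^sub>v vec m (\<lambda>j. \<Sum>\<nu><D. W \<nu> $ j)) $ i = (\<Sum>j\<in>{0..<m}. T $$ (i,j) * (\<Sum>\<nu><D. W \<nu> $ j))"
    by (subst mv_entry[OF T _ i]) auto
  also have "\<dots> = (\<Sum>\<nu><D. \<Sum>j\<in>{0..<m}. T $$ (i,j) * W \<nu> $ j)"
    by (simp add: sum_distrib_left sum.swap[of _ "{0..<m}"])
  also have "\<dots> = (\<Sum>\<nu><D. (T *\<^sub>v W \<nu>) $ i)"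
    by (intro sum.cong refl) (simp add: mv_entry[OF T W i])
  finally show ?thesis .
qed

lemma kron_index_c:
  assumes "A \<in> carrier_mat a b" "B \<in> carrier_mat c d" "i < a*c" "j < b*d"
  shows "kron A B $$ (i,j) = A $$ (i div c, j div d) * B $$ (i mod c, j mod d)"
  using assms kron_index[of i A B j] by auto

lemma sq_one:
  fixes g :: "complex mat"
  assumes g: "g \<in> carrier_mat r r" and cl: "g * g + g * g = 2 \<cdot>\<^sub>m 1\<^sub>m r"
  shows "g * g = 1\<^sub>m r"
proof (rule eq_matI)
  fix s t assume s: "s < dim_row (1\<^sub>m r :: complex mat)" and t: "t < dim_col (1\<^sub>m r :: complex mat)"
  have "(g * g + g * g) $$ (s,t) = (2 \<cdot>\<^sub>m 1\<^sub>m r) $$ (s,t)" using cl by simp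
  then have "(g*g) $$ (s,t) + (g*g) $$ (s,t) = 2 * (1\<^sub>m r :: complex mat) $$ (s,t)"
    using s t g by simp
  then show "(g * g) $$ (s,t) = (1\<^sub>m r :: complex mat) $$ (s,t)" by simp
qed (use g in auto)

lemma anti_entry:
  fixes g h :: "complex mat"
  assumes g: "g \<in> carrier_mat r r" and h: "h \<in> carrier_mat r r" and cl: "g * h + h * g = 0 \<cdot>\<^sub>m 1\<^sub>m r"
    and s: "s < r" and t: "t < r"
  shows "(g * h) $$ (s,t) + (h * g) $$ (s,t) = 0"
proof -
  have "(g * h + h * g) $$ (s,t) = (0 \<cdot>\<^sub>m 1\<^sub>m r) $$ (s,t)" using cl by simp
  then show ?thesis using s t g h by simp
qed

lemma clifford_sq:
  fixes X g :: "nat \<Rightarrow> complex mat"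
  assumes X: "\<And>\<mu>. \<mu> < D \<Longrightarrow> X \<mu> \<in> carrier_mat N N"
    and g: "\<And>\<mu>. \<mu> < D \<Longrightarrow> g \<mu> \<in> carrier_mat r r"
    and comm: "\<And>\<mu> \<nu>. \<mu> < D \<Longrightarrow> \<nu> < D \<Longrightarrow> X \<mu> * X \<nu> = X \<nu> * X \<mu>"
    and cl: "\<And>\<mu> \<nu>. \<mu> < D \<Longrightarrow> \<nu> < D \<Longrightarrow> g \<mu> * g \<nu> + g \<nu> * g \<mu> = (if \<mu> = \<nu> then 2 else 0) \<cdot>\<^sub>m 1\<^sub>m r"
    and v: "v \<in> carrier_vec (N*r)" and i: "i < N*r"
  shows "(mat (N*r) (N*r) (\<lambda>ij. \<Sum>\<mu><D. kron (X \<mu>) (g \<mu>) $$ ij) *\<^sub>v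
           (mat (N*r) (N*r) (\<lambda>ij. \<Sum>\<mu><D. kron (X \<mu>) (g \<mu>) $$ ij) *\<^sub>v v)) $ i
       = (\<Sum>\<mu><D. (kron (X \<mu>) (1\<^sub>m r) *\<^sub>v (kron (X \<mu>) (1\<^sub>m r) *\<^sub>v v)) $ i)"
proof -
  define T where "T = (\<lambda>\<mu>. kron (X \<mu>) (g \<mu>))"
  define Dm where "Dm = mat (N*r) (N*r) (\<lambda>ij. \<Sum>\<mu><D. T \<mu> $$ ij)"
  have T: "\<And>\<mu>. \<mu> < D \<Longrightarrow> T \<mu> \<in> carrier_mat (N*r) (N*r)"
    unfolding T_def using X g kron_carrier by blast
  have Tv: "\<And>\<nu>. \<nu> < D \<Longrightarrow> T \<nu> *\<^sub>v v \<in> carrier_vec (N*r)" using T v by (metis mult_mat_vec_carrier)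
  have Dv: "Dm *\<^sub>v v = vec (N*r) (\<lambda>j. \<Sum>\<nu><D. (T \<nu> *\<^sub>v v) $ j)"
    unfolding Dm_def by (rule dirac_mat_vec[OF T v])
  have Dvc: "Dm *\<^sub>v v \<in> carrier_vec (N*r)" unfolding Dm_def using v by (metis mult_mat_vec_carrier mat_carrier)
  have DDv: "Dm *\<^sub>v (Dm *\<^sub>v v) = vec (N*r) (\<lambda>i. \<Sum>\<mu><D. (T \<mu> *\<^sub>v (Dm *\<^sub>v v)) $ i)"
    unfolding Dm_def by (rule dirac_mat_vec[OF T Dvc[unfolded Dm_def]])
  have "(Dm *\<^sub>v (Dm *\<^sub>v v)) $ i = (\<Sum>\<mu><D. (T \<mu> *\<^sub>v (Dm *\<^sub>v v)) $ i)"
    unfolding DDv using i by simp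
  also have "\<dots> = (\<Sum>\<mu><D. \<Sum>\<nu><D. ((T \<mu> * T \<nu>) *\<^sub>v v) $ i)"
  proof (intro sum.cong refl)
    fix \<mu> assume "\<mu> \<in> {..<D}"
    then have \<mu>: "\<mu> < D" by simp
    have "(T \<mu> *\<^sub>v (Dm *\<^sub>v v)) $ i = (\<Sum>\<nu><D. (T \<mu> *\<^sub>v (T \<nu> *\<^sub>v v)) $ i)"
      unfolding Dv by (rule mat_vec_sum_entry[OF T[OF \<mu>] i Tv])
    also have "\<dots> = (\<Sum>\<nu><D. ((T \<mu> * T \<nu>) *\<^sub>v v) $ i)"
      by (intro sum.cong refl) (use T[OF \<mu>] T v in \<open>subst assoc_mult_mat_vec, auto\<close>)
    finally show "(T \<mu> *\<^sub>v (Dm *\<^sub>v v)) $ i = (\<Sum>\<nu><D. ((T \<mu> * T \<nu>) *\<^sub>v v) $ i)" .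
  qed
  also have "\<dots> = (\<Sum>\<mu><D. ((T \<mu> * T \<mu>) *\<^sub>v v) $ i)"
  proof (rule sum_sym_cancel)
    fix \<mu> \<nu> assume \<mu>: "\<mu> < D" and \<nu>: "\<nu> < D" and ne: "\<mu> \<noteq> \<nu>"
    have e1: "T \<mu> * T \<nu> = kron (X \<mu> * X \<nu>) (g \<mu> * g \<nu>)"
      unfolding T_def by (rule kron_mult[OF X[OF \<mu>] g[OF \<mu>] X[OF \<nu>] g[OF \<nu>]])
    have e2: "T \<nu> * T \<mu> = kron (X \<mu> * X \<nu>) (g \<nu> * g \<mu>)"
      unfolding T_def comm[OF \<mu> \<nu>] by (rule kron_mult[OF X[OF \<nu>] g[OF \<nu>] X[OF \<mu>] g[OF \<mu>]])
    have P: "X \<mu> * X \<nu> \<in> carrier_mat N N" using mult_carrier_mat[OF X[OF \<mu>] X[OF \<nu>]] .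
    have G1: "g \<mu> * g \<nu> \<in> carrier_mat r r" using mult_carrier_mat[OF g[OF \<mu>] g[OF \<nu>]] .
    have G2: "g \<nu> * g \<mu> \<in> carrier_mat r r" using mult_carrier_mat[OF g[OF \<nu>] g[OF \<mu>]] .
    have ir: "i div r < N" "i mod r < r"
      using i by (auto simp: less_mult_imp_div_less) (cases r; auto)
    have "((T \<mu> * T \<nu>) *\<^sub>v v) $ i + ((T \<nu> * T \<mu>) *\<^sub>v v) $ i
        = (\<Sum>j\<in>{0..<N*r}. (kron (X \<mu> * X \<nu>) (g \<mu> * g \<nu>) $$ (i,j) + kron (X \<mu> * X \<nu>) (g \<nu> * g \<mu>) $$ (i,j)) * v $ j)"
      unfolding e1 e2 mv_entry[OF kron_carrier[OF P G1] v i] mv_entry[OF kron_carrier[OF P G2] v i]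
      by (simp add: sum.distrib algebra_simps)
    also have "\<dots> = 0"
    proof (intro sum.neutral ballI)
      fix j assume "j \<in> {0..<N*r}"
      then have j: "j < N*r" by simp
      have jr: "j div r < N" "j mod r < r"
        using j by (auto simp: less_mult_imp_div_less) (cases r; auto)
      have "kron (X \<mu> * X \<nu>) (g \<mu> * g \<nu>) $$ (i,j) + kron (X \<mu> * X \<nu>) (g \<nu> * g \<mu>) $$ (i,j)
          = (X \<mu> * X \<nu>) $$ (i div r, j div r) * ((g \<mu> * g \<nu>) $$ (i mod r, j mod r) + (g \<nu> * g \<mu>) $$ (i mod r, j mod r))"
        by (simp add: kron_index_c[OF P G1 i j] kron_index_c[OF P G2 i j] algebra_simps)
      also have "\<dots> = 0"
        using anti_entry[OF g[OF \<mu>] g[OF \<nu>] _ ir(2) jr(2)] cl[OF \<mu> \<nu>] ne by simp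
      finally show "(kron (X \<mu> * X \<nu>) (g \<mu> * g \<nu>) $$ (i,j) + kron (X \<mu> * X \<nu>) (g \<nu> * g \<mu>) $$ (i,j)) * v $ j = 0"
        by simp
    qed
    finally show "((T \<mu> * T \<nu>) *\<^sub>v v) $ i + ((T \<nu> * T \<mu>) *\<^sub>v v) $ i = 0" .
  qed
  also have "\<dots> = (\<Sum>\<mu><D. (kron (X \<mu>) (1\<^sub>m r) *\<^sub>v (kron (X \<mu>) (1\<^sub>m r) *\<^sub>v v)) $ i)"
  proof (intro sum.cong refl)
    fix \<mu> assume "\<mu> \<in> {..<D}"
    then have \<mu>: "\<mu> < D" by simp
    have gg: "g \<mu> * g \<mu> = 1\<^sub>m r" using sq_one[OF g[OF \<mu>]] cl[OF \<mu> \<mu>] by simp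
    have "T \<mu> * T \<mu> = kron (X \<mu> * X \<mu>) (1\<^sub>m r)"
      unfolding T_def kron_mult[OF X[OF \<mu>] g[OF \<mu>] X[OF \<mu>] g[OF \<mu>]] gg ..
    also have "\<dots> = kron (X \<mu>) (1\<^sub>m r) * kron (X \<mu>) (1\<^sub>m r)"
      using kron_mult[OF X[OF \<mu>] one_carrier_mat[of r] X[OF \<mu>] one_carrier_mat[of r]] by simp
    finally have "T \<mu> * T \<mu> = kron (X \<mu>) (1\<^sub>m r) * kron (X \<mu>) (1\<^sub>m r)" .
    then show "((T \<mu> * T \<mu>) *\<^sub>v v) $ i = (kron (X \<mu>) (1\<^sub>m r) *\<^sub>v (kron (X \<mu>) (1\<^sub>m r) *\<^sub>v v)) $ i"
      using kron_carrier[OF X[OF \<mu>] one_carrier_mat[of r]] v by (simp add: assoc_mult_mat_vec)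
  qed
  finally show ?thesis unfolding Dm_def T_def .
qed

definition skew :: "complex mat \<Rightarrow> bool" where
  "skew M \<longleftrightarrow> (\<forall>i j. i < dim_row M \<longrightarrow> j < dim_row M \<longrightarrow> M $$ (i,j) = - cnj (M $$ (j,i)))"

lemma skew_quad:
  fixes L :: "complex mat"
  assumes L: "L \<in> carrier_mat m m" and sk: "skew L" and v: "v \<in> carrier_vec m"
  shows "(\<Sum>i\<in>{0..<m}. cnj (v$i) * (L *\<^sub>v (L *\<^sub>v v)) $ i)
       = - (\<Sum>k\<in>{0..<m}. complex_of_real ((cmod ((L *\<^sub>v v) $ k))\<^sup>2))"
proof -
  define w where "w = L *\<^sub>v v"
  have w: "w \<in> carrier_vec m" unfolding w_def using L v by simp
  have "(\<Sum>i\<in>{0..<m}. cnj (v$i) * (L *\<^sub>v w) $ i) = (\<Sum>i\<in>{0..<m}. cnj (v$i) * (\<Sum>k\<in>{0..<m}. L $$ (i,k) * w $ k))"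
    by (intro sum.cong refl) (simp add: mv_entry[OF L w])
  also have "\<dots> = (\<Sum>i\<in>{0..<m}. \<Sum>k\<in>{0..<m}. cnj (v$i) * L $$ (i,k) * w $ k)"
    by (simp add: sum_distrib_left mult.assoc)
  also have "\<dots> = (\<Sum>k\<in>{0..<m}. \<Sum>i\<in>{0..<m}. cnj (v$i) * L $$ (i,k) * w $ k)"
    by (rule sum.swap)
  also have "\<dots> = (\<Sum>k\<in>{0..<m}. w $ k * (\<Sum>i\<in>{0..<m}. cnj (v$i) * L $$ (i,k)))"
    by (intro sum.cong refl) (simp add: sum_distrib_left algebra_simps)
  also have "\<dots> = (\<Sum>k\<in>{0..<m}. - (w $ k * cnj (w $ k)))"
  proof (intro sum.cong refl)
    fix k assume "k \<in> {0..<m}"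
    then have k: "k < m" by simp
    have "(\<Sum>i\<in>{0..<m}. cnj (v$i) * L $$ (i,k)) = (\<Sum>i\<in>{0..<m}. - cnj (L $$ (k,i) * v $ i))"
    proof (intro sum.cong refl)
      fix i assume "i \<in> {0..<m}"
      then have i: "i < m" by simp
      have dL: "dim_row L = m" using L by simp
      have "L $$ (i,k) = - cnj (L $$ (k,i))" using sk i k dL unfolding skew_def by blast
      then show "cnj (v$i) * L $$ (i,k) = - cnj (L $$ (k,i) * v $ i)" by simp
    qed
    also have "\<dots> = - cnj (w $ k)"
      unfolding w_def mv_entry[OF L v k] by (simp add: sum_negf)
    finally show "w $ k * (\<Sum>i\<in>{0..<m}. cnj (v$i) * L $$ (i,k)) = - (w $ k * cnj (w $ k))" by simp
  qed
  also have "\<dots> = - (\<Sum>k\<in>{0..<m}. complex_of_real ((cmod (w $ k))\<^sup>2))"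
    by (simp only: complex_norm_square sum_negf)
  finally show ?thesis unfolding w_def .
qed

lemma skew_kron_one_left:
  assumes B: "B \<in> carrier_mat m m" and sk: "skew B"
  shows "skew (kron (1\<^sub>m a) B)"
  unfolding skew_def
proof (intro allI impI)
  fix i j assume i: "i < dim_row (kron (1\<^sub>m a) B)" and j: "j < dim_row (kron (1\<^sub>m a) B)"
  then have i': "i < a*m" and j': "j < a*m" using B by auto
  have m: "m > 0" using i' by (cases m) auto
  have d: "i div m < a" "j div m < a" "i mod m < m" "j mod m < m" using i' j' m
    by (auto simp: less_mult_imp_div_less)
  have dB: "dim_row B = m" using B by simp
  have e: "B $$ (i mod m, j mod m) = - cnj (B $$ (j mod m, i mod m))" using sk d dB unfolding skew_def by blast
  show "kron (1\<^sub>m a) B $$ (i, j) = - cnj (kron (1\<^sub>m a) B $$ (j, i))"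
    using e B d by (simp add: kron_index_c[OF one_carrier_mat B i' j'] kron_index_c[OF one_carrier_mat B j' i'])
qed

lemma skew_kron_one_right:
  assumes B: "B \<in> carrier_mat m m" and sk: "skew B"
  shows "skew (kron B (1\<^sub>m a))"
  unfolding skew_def
proof (intro allI impI)
  fix i j assume i: "i < dim_row (kron B (1\<^sub>m a))" and j: "j < dim_row (kron B (1\<^sub>m a))"
  then have i': "i < m*a" and j': "j < m*a" using B by auto
  have a: "a > 0" using i' by (cases a) auto
  have d: "i div a < m" "j div a < m" "i mod a < a" "j mod a < a" using i' j' a
    by (auto simp: less_mult_imp_div_less)
  have dB: "dim_row B = m" using B by simp
  have e: "B $$ (i div a, j div a) = - cnj (B $$ (j div a, i div a))" using sk d dB unfolding skew_def by blast
  show "kron B (1\<^sub>m a) $$ (i, j) = - cnj (kron B (1\<^sub>m a) $$ (j, i))"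
    using e B d by (simp add: kron_index_c[OF B one_carrier_mat i' j'] kron_index_c[OF B one_carrier_mat j' i'])
qed

lemma skew_A_as:
  assumes "\<And>i j. (i,j) \<in> E \<Longrightarrow> (j,i) \<notin> E"
  shows "skew (A_as n E)"
  using assms unfolding skew_def A_as_def by auto

lemma kernel_extract:
  fixes L :: "nat \<Rightarrow> complex mat"
  assumes L: "\<And>\<mu>. \<mu> < D \<Longrightarrow> L \<mu> \<in> carrier_mat m m" and sk: "\<And>\<mu>. \<mu> < D \<Longrightarrow> skew (L \<mu>)"
    and v: "v \<in> carrier_vec m" and R: "R \<subseteq> {0..<m}"
    and hyp: "\<And>i. i < m \<Longrightarrow> (\<Sum>\<mu><D. (L \<mu> *\<^sub>v (L \<mu> *\<^sub>v v)) $ i) - (if i \<in> R then v $ i else 0) = 0"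
  shows "\<forall>\<mu><D. \<forall>k<m. (L \<mu> *\<^sub>v v) $ k = 0" and "\<forall>j\<in>R. v $ j = 0"
proof -
  define s1 where "s1 = (\<Sum>\<mu><D. \<Sum>k\<in>{0..<m}. (cmod ((L \<mu> *\<^sub>v v) $ k))\<^sup>2)"
  define s2 where "s2 = (\<Sum>i\<in>R. (cmod (v $ i))\<^sup>2)"
  have fR: "finite R" using R finite_subset by blast
  have "0 = (\<Sum>i\<in>{0..<m}. cnj (v$i) * ((\<Sum>\<mu><D. (L \<mu> *\<^sub>v (L \<mu> *\<^sub>v v)) $ i) - (if i \<in> R then v $ i else 0)))"
    using hyp by simp
  also have "\<dots> = (\<Sum>i\<in>{0..<m}. cnj (v$i) * (\<Sum>\<mu><D. (L \<mu> *\<^sub>v (L \<mu> *\<^sub>v v)) $ i))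
                 - (\<Sum>i\<in>{0..<m}. cnj (v$i) * (if i \<in> R then v $ i else 0))"
    by (simp only: right_diff_distrib sum_subtractf)
  also have "(\<Sum>i\<in>{0..<m}. cnj (v$i) * (\<Sum>\<mu><D. (L \<mu> *\<^sub>v (L \<mu> *\<^sub>v v)) $ i))
      = (\<Sum>\<mu><D. \<Sum>i\<in>{0..<m}. cnj (v$i) * (L \<mu> *\<^sub>v (L \<mu> *\<^sub>v v)) $ i)"
    by (simp only: sum_distrib_left) (rule sum.swap)
  also have "(\<Sum>i\<in>{0..<m}. cnj (v$i) * (if i \<in> R then v $ i else 0))
      = (\<Sum>i\<in>{0..<m}. if i \<in> R then cnj (v$i) * v $ i else 0)"
    by (intro sum.cong refl) simp
  also have "(\<Sum>i\<in>{0..<m}. if i \<in> R then cnj (v$i) * v $ i else 0) = (\<Sum>i\<in>R. cnj (v$i) * v $ i)"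
    using R by (simp add: sum.inter_restrict[symmetric] Int_absorb1)
  also have "\<dots> = complex_of_real s2"
    unfolding s2_def of_real_sum complex_norm_square by (intro sum.cong refl) (rule mult.commute)
  also have "(\<Sum>\<mu><D. \<Sum>i\<in>{0..<m}. cnj (v$i) * (L \<mu> *\<^sub>v (L \<mu> *\<^sub>v v)) $ i)
     = (\<Sum>\<mu><D. - (\<Sum>k\<in>{0..<m}. complex_of_real ((cmod ((L \<mu> *\<^sub>v v) $ k))\<^sup>2)))"
  proof (intro sum.cong refl)
    fix \<mu> assume "\<mu> \<in> {..<D}"
    then have \<mu>: "\<mu> < D" by simp
    show "(\<Sum>i\<in>{0..<m}. cnj (v$i) * (L \<mu> *\<^sub>v (L \<mu> *\<^sub>v v)) $ i)
     = - (\<Sum>k\<in>{0..<m}. complex_of_real ((cmod ((L \<mu> *\<^sub>v v) $ k))\<^sup>2))"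
      by (rule skew_quad[OF L[OF \<mu>] sk[OF \<mu>] v])
  qed
  also have "\<dots> = - complex_of_real s1"
    unfolding s1_def of_real_sum sum_negf ..
  finally have eq0: "0 = - complex_of_real s1 - complex_of_real s2" .
  have "complex_of_real (s1 + s2) = - (- complex_of_real s1 - complex_of_real s2)" by simp
  then have "complex_of_real (s1 + s2) = 0" unfolding eq0[symmetric] by simp
  then have s: "s1 + s2 = 0" by (simp only: of_real_eq_0_iff)
  have s1p: "s1 \<ge> 0" unfolding s1_def by (intro sum_nonneg) auto
  have s2p: "s2 \<ge> 0" unfolding s2_def by (intro sum_nonneg) auto
  have "s1 = 0" using s s1p s2p by linarith
  then have "\<forall>\<mu>\<in>{..<D}. (\<Sum>k\<in>{0..<m}. (cmod ((L \<mu> *\<^sub>v v) $ k))\<^sup>2) = 0"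
    unfolding s1_def by (subst (asm) sum_nonneg_eq_0_iff) (auto intro: sum_nonneg)
  then show "\<forall>\<mu><D. \<forall>k<m. (L \<mu> *\<^sub>v v) $ k = 0"
    by (auto simp: sum_nonneg_eq_0_iff)
  have "s2 = 0" using s s1p s2p by linarith
  then show "\<forall>j\<in>R. v $ j = 0"
    unfolding s2_def using fR by (simp add: sum_nonneg_eq_0_iff)
qed

definition Xm :: "(nat \<Rightarrow> bool) \<Rightarrow> (nat \<Rightarrow> nat) \<Rightarrow> nat \<Rightarrow> nat \<Rightarrow> complex mat" where
  "Xm cyc n D \<mu> = kron (kron (1\<^sub>m (\<Prod>\<nu>\<in>{Suc \<mu>..<D}. n \<nu>)) (A_as (n \<mu>) (factor_edges cyc n \<mu>))) (1\<^sub>m (\<Prod>\<nu><\<mu>. n \<nu>))"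

lemma dirac_Xm: "dirac D cyc n r \<gamma> = mat ((\<Prod>\<nu><D. n \<nu>) * r) ((\<Prod>\<nu><D. n \<nu>) * r) (\<lambda>ij. \<Sum>\<mu><D. kron (Xm cyc n D \<mu>) (\<gamma> \<mu>) $$ ij)"
  unfolding dirac_def Xm_def Let_def ..

lemma A_as_carrier: "A_as n E \<in> carrier_mat n n"
  unfolding A_as_def by simp

lemma prod_lt_split: fixes \<mu> D :: nat shows "\<mu> \<le> D \<Longrightarrow> (\<Prod>\<nu><D. f \<nu>) = (\<Prod>\<nu><\<mu>. f \<nu>) * (\<Prod>\<nu>\<in>{\<mu>..<D}. f \<nu>)"
  using prod.atLeastLessThan_concat[of 0 \<mu> D f] by (simp add: lessThan_atLeast0)

lemma prod_split3: "\<mu> < D \<Longrightarrow> (\<Prod>\<nu><D. f \<nu>) = (\<Prod>\<nu>\<in>{Suc \<mu>..<D}. f \<nu>) * f \<mu> * (\<Prod>\<nu><\<mu>. f \<nu>)"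
  using prod_lt_split[of \<mu> D f] prod.atLeast_Suc_lessThan[of \<mu> D f] by (simp add: algebra_simps)

lemma prod_mid_split: "\<mu> < \<nu> \<Longrightarrow> \<nu> < D \<Longrightarrow>
   (\<Prod>k\<in>{Suc \<mu>..<D}. f k) = (\<Prod>k\<in>{Suc \<nu>..<D}. f k) * f \<nu> * (\<Prod>k\<in>{Suc \<mu>..<\<nu>}. f k)"
proof -
  assume a: "\<mu> < \<nu>" "\<nu> < D"
  have "(\<Prod>k\<in>{Suc \<mu>..<D}. f k) = (\<Prod>k\<in>{Suc \<mu>..<\<nu>}. f k) * (\<Prod>k\<in>{\<nu>..<D}. f k)"
    using a by (simp add: prod.atLeastLessThan_concat)
  also have "(\<Prod>k\<in>{\<nu>..<D}. f k) = f \<nu> * (\<Prod>k\<in>{Suc \<nu>..<D}. f k)"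
    using a by (simp add: prod.atLeast_Suc_lessThan)
  finally show ?thesis by (simp add: algebra_simps)
qed

lemma prod_lo_split: "\<mu> < \<nu> \<Longrightarrow>
   (\<Prod>k<\<nu>. f k) = (\<Prod>k\<in>{Suc \<mu>..<\<nu>}. f k) * f \<mu> * (\<Prod>k<\<mu>. f k)"
  using prod_split3[of \<mu> \<nu> f] by simp

lemma Xm_carrier: "\<mu> < D \<Longrightarrow> Xm cyc n D \<mu> \<in> carrier_mat (\<Prod>\<nu><D. n \<nu>) (\<Prod>\<nu><D. n \<nu>)"
  unfolding Xm_def prod_split3[of \<mu> D n]
  by (intro kron_carrier A_as_carrier one_carrier_mat)

lemma kron_mult_sq:
  fixes A :: "complex mat"
  assumes "A \<in> carrier_mat a a" "B \<in> carrier_mat b b" "C \<in> carrier_mat a a" "D \<in> carrier_mat b b"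
  shows "kron A B * kron C D = kron (A * C) (B * D)"
  by (rule kron_mult[OF assms])

lemma kron5_mult:
  fixes P1 :: "complex mat"
  assumes p1: "P1 \<in> carrier_mat s1 s1" and p2: "P2 \<in> carrier_mat s2 s2" and p3: "P3 \<in> carrier_mat s3 s3"
    and p4: "P4 \<in> carrier_mat s4 s4" and p5: "P5 \<in> carrier_mat s5 s5"
    and q1: "Q1 \<in> carrier_mat s1 s1" and q2: "Q2 \<in> carrier_mat s2 s2" and q3: "Q3 \<in> carrier_mat s3 s3"
    and q4: "Q4 \<in> carrier_mat s4 s4" and q5: "Q5 \<in> carrier_mat s5 s5"
  shows "kron (kron (kron (kron P1 P2) P3) P4) P5 * kron (kron (kron (kron Q1 Q2) Q3) Q4) Q5
       = kron (kron (kron (kron (P1*Q1) (P2*Q2)) (P3*Q3)) (P4*Q4)) (P5*Q5)"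
proof -
  have a1: "kron P1 P2 \<in> carrier_mat (s1*s2) (s1*s2)" "kron Q1 Q2 \<in> carrier_mat (s1*s2) (s1*s2)"
    using p1 p2 q1 q2 by (simp_all add: kron_carrier)
  have a2: "kron (kron P1 P2) P3 \<in> carrier_mat (s1*s2*s3) (s1*s2*s3)" "kron (kron Q1 Q2) Q3 \<in> carrier_mat (s1*s2*s3) (s1*s2*s3)"
    using a1 p3 q3 by (simp_all add: kron_carrier)
  have a3: "kron (kron (kron P1 P2) P3) P4 \<in> carrier_mat (s1*s2*s3*s4) (s1*s2*s3*s4)"
       "kron (kron (kron Q1 Q2) Q3) Q4 \<in> carrier_mat (s1*s2*s3*s4) (s1*s2*s3*s4)"
    using a2 p4 q4 by (simp_all add: kron_carrier)
  show ?thesis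
    by (simp only: kron_mult_sq[OF a3(1) p5 a3(2) q5] kron_mult_sq[OF a2(1) p4 a2(2) q4]
        kron_mult_sq[OF a1(1) p3 a1(2) q3] kron_mult_sq[OF p1 p2 q1 q2])
qed

lemma Xm_comm_lt:
  assumes mn: "\<mu> < \<nu>" and nD: "\<nu> < D"
  shows "Xm cyc n D \<mu> * Xm cyc n D \<nu> = Xm cyc n D \<nu> * Xm cyc n D \<mu>"
proof -
  define H where "H = (\<Prod>k\<in>{Suc \<nu>..<D}. n k)"
  define M where "M = (\<Prod>k\<in>{Suc \<mu>..<\<nu>}. n k)"
  define L where "L = (\<Prod>k<\<mu>. n k)"
  define A where "A = A_as (n \<mu>) (factor_edges cyc n \<mu>)"
  define B where "B = A_as (n \<nu>) (factor_edges cyc n \<nu>)"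
  have A: "A \<in> carrier_mat (n \<mu>) (n \<mu>)" and B: "B \<in> carrier_mat (n \<nu>) (n \<nu>)"
    unfolding A_def B_def by (simp_all add: A_as_carrier)
  have X1: "Xm cyc n D \<mu> = kron (kron (kron (kron (1\<^sub>m H) (1\<^sub>m (n \<nu>))) (1\<^sub>m M)) A) (1\<^sub>m L)"
    unfolding Xm_def prod_mid_split[OF mn nD] kron_one_one H_def M_def L_def A_def ..
  have X2: "Xm cyc n D \<nu> = kron (kron (kron (kron (1\<^sub>m H) B) (1\<^sub>m M)) (1\<^sub>m (n \<mu>))) (1\<^sub>m L)"
    unfolding Xm_def prod_lo_split[OF mn] H_def M_def L_def B_def
    by (simp only: kron_one_one[symmetric] kron_assoc)
  have o: "\<And>k. (1\<^sub>m k :: complex mat) \<in> carrier_mat k k" by simp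
  show ?thesis unfolding X1 X2
    by (simp only: kron5_mult[OF o o o A o o B o o o] kron5_mult[OF o B o o o o o o A o]
        left_mult_one_mat[OF A] left_mult_one_mat[OF B] right_mult_one_mat[OF A] right_mult_one_mat[OF B]
        left_mult_one_mat[OF o])
qed

lemma Xm_comm:
  assumes "\<mu> < D" "\<nu> < D"
  shows "Xm cyc n D \<mu> * Xm cyc n D \<nu> = Xm cyc n D \<nu> * Xm cyc n D \<mu>"
proof -
  consider "\<mu> < \<nu>" | "\<mu> = \<nu>" | "\<nu> < \<mu>" by linarith
  then show ?thesis
  proof cases
    case 1 then show ?thesis by (rule Xm_comm_lt[OF _ assms(2)])
  next
    case 2 then show ?thesis by simp
  next
    case 3 then show ?thesis by (rule Xm_comm_lt[OF _ assms(1), symmetric])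
  qed
qed

lemma skew_Xm:
  assumes "\<mu> < D" and "\<And>i j. (i,j) \<in> factor_edges cyc n \<mu> \<Longrightarrow> (j,i) \<notin> factor_edges cyc n \<mu>"
  shows "skew (kron (Xm cyc n D \<mu>) (1\<^sub>m r))"
proof -
  have sA: "skew (A_as (n \<mu>) (factor_edges cyc n \<mu>))" by (rule skew_A_as) (use assms in blast)
  have c1: "kron (1\<^sub>m (\<Prod>\<nu>\<in>{Suc \<mu>..<D}. n \<nu>)) (A_as (n \<mu>) (factor_edges cyc n \<mu>)) \<in> carrier_mat ((\<Prod>\<nu>\<in>{Suc \<mu>..<D}. n \<nu>) * n \<mu>) ((\<Prod>\<nu>\<in>{Suc \<mu>..<D}. n \<nu>) * n \<mu>)"
    by (intro kron_carrier A_as_carrier one_carrier_mat)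
  have s1: "skew (kron (1\<^sub>m (\<Prod>\<nu>\<in>{Suc \<mu>..<D}. n \<nu>)) (A_as (n \<mu>) (factor_edges cyc n \<mu>)))"
    by (rule skew_kron_one_left[OF A_as_carrier sA])
  have s2: "skew (Xm cyc n D \<mu>)"
    unfolding Xm_def by (rule skew_kron_one_right[OF c1 s1])
  show ?thesis by (rule skew_kron_one_right[OF Xm_carrier[OF assms(1)] s2])
qed

lemma Xm_Suc_lt:
  assumes "\<mu> < D"
  shows "Xm cyc n (Suc D) \<mu> = kron (1\<^sub>m (n D)) (Xm cyc n D \<mu>)"
proof -
  have "(\<Prod>\<nu>\<in>{Suc \<mu>..<Suc D}. n \<nu>) = n D * (\<Prod>\<nu>\<in>{Suc \<mu>..<D}. n \<nu>)"
    using assms by (simp add: prod.atLeastLessThan_Suc)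
  then show ?thesis unfolding Xm_def
    by (simp only: kron_one_one[symmetric] kron_assoc)
qed

lemma Xm_Suc_top:
  "Xm cyc n (Suc D) D = kron (A_as (n D) (factor_edges cyc n D)) (1\<^sub>m (\<Prod>\<nu><D. n \<nu>))"
  unfolding Xm_def by (simp add: kron_one_left[unfolded One_nat_def])

lemma kron_one_left_vec:
  fixes Z :: "complex mat"
  assumes Z: "Z \<in> carrier_mat M M" and v: "v \<in> carrier_vec (n*M)" and k: "k < n" and i: "i < M"
  shows "(kron (1\<^sub>m n) Z *\<^sub>v v) $ (k*M+i) = (Z *\<^sub>v vec M (\<lambda>p. v $ (k*M+p))) $ i"
proof -
  have "(kron (1\<^sub>m n) Z *\<^sub>v v) $ (k*M+i) = (\<Sum>l\<in>{0..<n}. \<Sum>p\<in>{0..<M}. (1\<^sub>m n :: complex mat) $$ (k,l) * Z $$ (i,p) * v $ (l*M+p))"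
    by (rule kron_mult_vec[OF one_carrier_mat Z v k i])
  also have "\<dots> = (\<Sum>l\<in>{0..<n}. if l = k then (\<Sum>p\<in>{0..<M}. Z $$ (i,p) * v $ (k*M+p)) else 0)"
    using k by (intro sum.cong refl) auto
  also have "\<dots> = (\<Sum>p\<in>{0..<M}. Z $$ (i,p) * v $ (k*M+p))"
    using k by simp
  also have "\<dots> = (Z *\<^sub>v vec M (\<lambda>p. v $ (k*M+p))) $ i"
    by (subst mv_entry[OF Z _ i]) auto
  finally show ?thesis .
qed

lemma kron_one_right_vec:
  fixes B :: "complex mat"
  assumes B: "B \<in> carrier_mat n n" and v: "v \<in> carrier_vec (n*M)" and k: "k < n" and i: "i < M"
  shows "(kron B (1\<^sub>m M) *\<^sub>v v) $ (k*M+i) = (B *\<^sub>v vec n (\<lambda>l. v $ (l*M+i))) $ k"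
proof -
  have "(kron B (1\<^sub>m M) *\<^sub>v v) $ (k*M+i) = (\<Sum>l\<in>{0..<n}. \<Sum>p\<in>{0..<M}. B $$ (k,l) * (1\<^sub>m M :: complex mat) $$ (i,p) * v $ (l*M+p))"
    by (rule kron_mult_vec[OF B one_carrier_mat v k i])
  also have "\<dots> = (\<Sum>l\<in>{0..<n}. B $$ (k,l) * v $ (l*M+i))"
  proof (intro sum.cong refl)
    fix l assume "l \<in> {0..<n}"
    have "(\<Sum>p\<in>{0..<M}. B $$ (k,l) * (1\<^sub>m M :: complex mat) $$ (i,p) * v $ (l*M+p))
        = (\<Sum>p\<in>{0..<M}. if p = i then B $$ (k,l) * v $ (l*M+i) else 0)"
      using i by (intro sum.cong refl) auto
    also have "\<dots> = B $$ (k,l) * v $ (l*M+i)" using i by simp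
    finally show "(\<Sum>p\<in>{0..<M}. B $$ (k,l) * (1\<^sub>m M :: complex mat) $$ (i,p) * v $ (l*M+p)) = B $$ (k,l) * v $ (l*M+i)" .
  qed
  also have "\<dots> = (B *\<^sub>v vec n (\<lambda>l. v $ (l*M+i))) $ k"
    by (subst mv_entry[OF B _ k]) auto
  finally show ?thesis .
qed

lemma step_kernel:
  fixes B :: "complex mat" and Z :: "nat \<Rightarrow> complex mat"
  assumes B: "B \<in> carrier_mat n n" and Z: "\<And>\<mu>. \<mu> < K \<Longrightarrow> Z \<mu> \<in> carrier_mat M M"
    and fac: "\<And>w. w \<in> carrier_vec n \<Longrightarrow> \<forall>k<n. (B *\<^sub>v w) $ k = 0 \<Longrightarrow> \<forall>k\<in>P. w $ k = 0 \<Longrightarrow> \<forall>k<n. w $ k = 0"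
    and IH: "\<And>u. u \<in> carrier_vec M \<Longrightarrow> \<forall>\<mu><K. \<forall>i<M. (Z \<mu> *\<^sub>v u) $ i = 0 \<Longrightarrow> \<forall>i\<in>R. u $ i = 0 \<Longrightarrow> \<forall>i<M. u $ i = 0"
    and PR: "P \<subseteq> {0..<n}" and RM: "R \<subseteq> {0..<M}"
    and v: "v \<in> carrier_vec (n*M)"
    and hB: "\<forall>j<n*M. (kron B (1\<^sub>m M) *\<^sub>v v) $ j = 0"
    and hZ: "\<forall>\<mu><K. \<forall>j<n*M. (kron (1\<^sub>m n) (Z \<mu>) *\<^sub>v v) $ j = 0"
    and hR: "\<forall>k\<in>P. \<forall>i\<in>R. v $ (k*M+i) = 0"
  shows "\<forall>j<n*M. v $ j = 0"
proof -
  have slice: "\<forall>i<M. v $ (k*M+i) = 0" if kP: "k \<in> P" for k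
  proof -
    have k: "k < n" using kP PR by auto
    show ?thesis
    proof -
      have "\<forall>i<M. vec M (\<lambda>p. v $ (k*M+p)) $ i = 0"
      proof (rule IH)
        show "vec M (\<lambda>p. v $ (k*M+p)) \<in> carrier_vec M" by simp
        show "\<forall>\<mu><K. \<forall>i<M. (Z \<mu> *\<^sub>v vec M (\<lambda>p. v $ (k*M+p))) $ i = 0"
        proof (intro allI impI)
          fix \<mu> i assume \<mu>: "\<mu> < K" and i: "i < M"
          have "(Z \<mu> *\<^sub>v vec M (\<lambda>p. v $ (k*M+p))) $ i = (kron (1\<^sub>m n) (Z \<mu>) *\<^sub>v v) $ (k*M+i)"
            by (rule kron_one_left_vec[OF Z[OF \<mu>] v k i, symmetric])
          also have "\<dots> = 0" using hZ \<mu> idx_lt[OF k i] by blast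
          finally show "(Z \<mu> *\<^sub>v vec M (\<lambda>p. v $ (k*M+p))) $ i = 0" .
        qed
        show "\<forall>i\<in>R. vec M (\<lambda>p. v $ (k*M+p)) $ i = 0"
        proof
          fix i assume iR: "i \<in> R"
          have "i < M" using iR RM by auto
          then show "vec M (\<lambda>p. v $ (k*M+p)) $ i = 0" using hR kP iR by simp
        qed
      qed
      then show ?thesis by simp
    qed
  qed
  have col: "\<forall>k<n. v $ (k*M+i) = 0" if i: "i < M" for i
  proof -
    have "\<forall>k<n. vec n (\<lambda>l. v $ (l*M+i)) $ k = 0"
    proof (rule fac)
      show "vec n (\<lambda>l. v $ (l*M+i)) \<in> carrier_vec n" by simp
      show "\<forall>k<n. (B *\<^sub>v vec n (\<lambda>l. v $ (l*M+i))) $ k = 0"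
      proof (intro allI impI)
        fix k assume k: "k < n"
        have "(B *\<^sub>v vec n (\<lambda>l. v $ (l*M+i))) $ k = (kron B (1\<^sub>m M) *\<^sub>v v) $ (k*M+i)"
          by (rule kron_one_right_vec[OF B v k i, symmetric])
        also have "\<dots> = 0" using hB idx_lt[OF k i] by blast
        finally show "(B *\<^sub>v vec n (\<lambda>l. v $ (l*M+i))) $ k = 0" .
      qed
      show "\<forall>k\<in>P. vec n (\<lambda>l. v $ (l*M+i)) $ k = 0"
        using slice i PR by auto
    qed
    then show ?thesis by simp
  qed
  show ?thesis
  proof (intro allI impI)
    fix j assume j: "j < n*M"
    then have M: "M > 0" by (cases M) auto
    have "j div M < n" using j by (simp add: less_mult_imp_div_less)
    moreover have "j mod M < M" using M by simp
    ultimately have "v $ (j div M * M + j mod M) = 0" using col by blast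
    then show "v $ j = 0" by simp
  qed
qed

definition Pi_set :: "(nat \<Rightarrow> bool) \<Rightarrow> nat \<Rightarrow> nat set" where
  "Pi_set cyc \<mu> = (if cyc \<mu> then {0,1} else {0})"

fun Rset :: "(nat \<Rightarrow> bool) \<Rightarrow> (nat \<Rightarrow> nat) \<Rightarrow> nat \<Rightarrow> nat \<Rightarrow> nat set" where
  "Rset cyc n r 0 = {0..<r}"
| "Rset cyc n r (Suc D) = (\<lambda>(k,i). k * ((\<Prod>\<nu><D. n \<nu>) * r) + i) ` (Pi_set cyc D \<times> Rset cyc n r D)"

lemma Pi_set_sub: "2 \<le> m \<Longrightarrow> Pi_set cyc \<mu> \<subseteq> {0..<m}"
  unfolding Pi_set_def by auto

lemma Rset_sub: "(\<And>\<mu>. \<mu> < D \<Longrightarrow> 2 \<le> n \<mu>) \<Longrightarrow> Rset cyc n r D \<subseteq> {0..<(\<Prod>\<nu><D. n \<nu>) * r}"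
proof (induction D)
  case 0 then show ?case by simp
next
  case (Suc D)
  have IH: "Rset cyc n r D \<subseteq> {0..<(\<Prod>\<nu><D. n \<nu>) * r}" using Suc by simp
  have P: "Pi_set cyc D \<subseteq> {0..<n D}" using Suc.prems[of D] by (intro Pi_set_sub) simp
  have eq: "(\<Prod>\<nu><Suc D. n \<nu>) * r = n D * ((\<Prod>\<nu><D. n \<nu>) * r)" by (simp add: algebra_simps)
  show ?case unfolding eq
  proof
    fix x assume "x \<in> Rset cyc n r (Suc D)"
    then obtain k i where x: "x = k * ((\<Prod>\<nu><D. n \<nu>) * r) + i" and k: "k \<in> Pi_set cyc D" and i: "i \<in> Rset cyc n r D"
      by auto
    have "k < n D" using k P by auto
    moreover have "i < (\<Prod>\<nu><D. n \<nu>) * r" using i IH by auto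
    ultimately show "x \<in> {0..<n D * ((\<Prod>\<nu><D. n \<nu>) * r)}" unfolding x using idx_lt by auto
  qed
qed

lemma card_cyc_Suc: "card {\<mu>\<in>{0..<Suc D}. cyc \<mu>} = card {\<mu>\<in>{0..<D}. cyc \<mu>} + (if cyc D then 1 else 0)"
proof -
  have "{\<mu>\<in>{0..<Suc D}. cyc \<mu>} = {\<mu>\<in>{0..<D}. cyc \<mu>} \<union> (if cyc D then {D} else {})"
    by (auto simp: less_Suc_eq)
  then show ?thesis by auto
qed

lemma finite_Rset: "finite (Rset cyc n r D)"
  by (induction D) (auto simp: Pi_set_def)

lemma Rset_card: "card (Rset cyc n r D) \<le> r * 2 ^ card {\<mu>\<in>{0..<D}. cyc \<mu>}"
proof (induction D)
  case 0 then show ?case by simp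
next
  case (Suc D)
  have "card (Rset cyc n r (Suc D)) \<le> card (Pi_set cyc D \<times> Rset cyc n r D)"
    by (simp only: Rset.simps) (rule card_image_le, simp add: finite_Rset Pi_set_def)
  also have "\<dots> = card (Pi_set cyc D) * card (Rset cyc n r D)"
    by (rule card_cartesian_product)
  also have "\<dots> \<le> card (Pi_set cyc D) * (r * 2 ^ card {\<mu>\<in>{0..<D}. cyc \<mu>})"
    using Suc.IH by simp
  also have "\<dots> = r * 2 ^ card {\<mu>\<in>{0..<Suc D}. cyc \<mu>}"
    unfolding card_cyc_Suc Pi_set_def by simp
  finally show ?case .
qed

lemma kernel_induct:
  "(\<And>\<mu>. \<mu> < D \<Longrightarrow> 2 \<le> n \<mu>) \<Longrightarrow>
   (\<And>\<mu> w. \<mu> < D \<Longrightarrow> w \<in> carrier_vec (n \<mu>) \<Longrightarrow>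
       \<forall>k<n \<mu>. (A_as (n \<mu>) (factor_edges cyc n \<mu>) *\<^sub>v w) $ k = 0 \<Longrightarrow>
       \<forall>k\<in>Pi_set cyc \<mu>. w $ k = 0 \<Longrightarrow> \<forall>k<n \<mu>. w $ k = 0) \<Longrightarrow>
   v \<in> carrier_vec ((\<Prod>\<nu><D. n \<nu>) * r) \<Longrightarrow>
   \<forall>\<mu><D. \<forall>k<(\<Prod>\<nu><D. n \<nu>) * r. (kron (Xm cyc n D \<mu>) (1\<^sub>m r) *\<^sub>v v) $ k = 0 \<Longrightarrow>
   \<forall>j\<in>Rset cyc n r D. v $ j = 0 \<Longrightarrow>
   \<forall>j<(\<Prod>\<nu><D. n \<nu>) * r. v $ j = 0"
proof (induction D arbitrary: v)
  case 0 then show ?case by simp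
next
  case (Suc D)
  define MM where "MM = (\<Prod>\<nu><D. n \<nu>) * r"
  define B where "B = A_as (n D) (factor_edges cyc n D)"
  define Z where "Z = (\<lambda>\<mu>. kron (Xm cyc n D \<mu>) (1\<^sub>m r))"
  have eqN: "(\<Prod>\<nu><Suc D. n \<nu>) * r = n D * MM" unfolding MM_def by (simp add: algebra_simps)
  have B: "B \<in> carrier_mat (n D) (n D)" unfolding B_def by (rule A_as_carrier)
  have Z: "\<And>\<mu>. \<mu> < D \<Longrightarrow> Z \<mu> \<in> carrier_mat MM MM"
    unfolding Z_def MM_def by (intro kron_carrier Xm_carrier one_carrier_mat)
  have ZS: "\<And>\<mu>. \<mu> < D \<Longrightarrow> kron (Xm cyc n (Suc D) \<mu>) (1\<^sub>m r) = kron (1\<^sub>m (n D)) (Z \<mu>)"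
    unfolding Z_def by (simp add: Xm_Suc_lt kron_assoc)
  have BS: "kron (Xm cyc n (Suc D) D) (1\<^sub>m r) = kron B (1\<^sub>m MM)"
    unfolding B_def MM_def Xm_Suc_top kron_assoc kron_one_one ..
  have n2D: "\<And>\<mu>. \<mu> < D \<Longrightarrow> 2 \<le> n \<mu>" using Suc.prems(1) by simp
  have facD: "\<And>\<mu> w. \<mu> < D \<Longrightarrow> w \<in> carrier_vec (n \<mu>) \<Longrightarrow>
       \<forall>k<n \<mu>. (A_as (n \<mu>) (factor_edges cyc n \<mu>) *\<^sub>v w) $ k = 0 \<Longrightarrow>
       \<forall>k\<in>Pi_set cyc \<mu>. w $ k = 0 \<Longrightarrow> \<forall>k<n \<mu>. w $ k = 0"
    by (rule Suc.prems(2)) auto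
  have v: "v \<in> carrier_vec (n D * MM)" using Suc.prems(3) unfolding eqN .
  show ?case unfolding eqN
  proof (rule step_kernel[OF B Z _ _ _ _ v])
    show "\<And>w. w \<in> carrier_vec (n D) \<Longrightarrow> \<forall>k<n D. (B *\<^sub>v w) $ k = 0 \<Longrightarrow> \<forall>k\<in>Pi_set cyc D. w $ k = 0 \<Longrightarrow> \<forall>k<n D. w $ k = 0"
      unfolding B_def using Suc.prems(2)[of D] by blast
    show "\<And>u. u \<in> carrier_vec MM \<Longrightarrow> \<forall>\<mu><D. \<forall>i<MM. (Z \<mu> *\<^sub>v u) $ i = 0 \<Longrightarrow> \<forall>i\<in>Rset cyc n r D. u $ i = 0 \<Longrightarrow> \<forall>i<MM. u $ i = 0"
    proof -
      fix u assume "u \<in> carrier_vec MM" "\<forall>\<mu><D. \<forall>i<MM. (Z \<mu> *\<^sub>v u) $ i = 0" "\<forall>i\<in>Rset cyc n r D. u $ i = 0"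
      then show "\<forall>i<MM. u $ i = 0"
        unfolding MM_def Z_def by (intro Suc.IH[OF n2D facD])
    qed
    show "Pi_set cyc D \<subseteq> {0..<n D}" using Suc.prems(1)[of D] by (intro Pi_set_sub) simp
    show "Rset cyc n r D \<subseteq> {0..<MM}" unfolding MM_def using Suc.prems(1) by (intro Rset_sub) simp
    have h4: "\<forall>\<mu><Suc D. \<forall>k<n D * MM. (kron (Xm cyc n (Suc D) \<mu>) (1\<^sub>m r) *\<^sub>v v) $ k = 0"
      using Suc.prems(4) unfolding eqN .
    have "\<forall>j<n D * MM. (kron (Xm cyc n (Suc D) D) (1\<^sub>m r) *\<^sub>v v) $ j = 0" using h4 by blast
    then show "\<forall>j<n D * MM. (kron B (1\<^sub>m MM) *\<^sub>v v) $ j = 0" unfolding BS .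
    show "\<forall>\<mu><D. \<forall>j<n D * MM. (kron (1\<^sub>m (n D)) (Z \<mu>) *\<^sub>v v) $ j = 0"
    proof (intro allI impI)
      fix \<mu> j assume \<mu>: "\<mu> < D" and j: "j < n D * MM"
      have "(kron (Xm cyc n (Suc D) \<mu>) (1\<^sub>m r) *\<^sub>v v) $ j = 0" using h4 \<mu> j by auto
      then show "(kron (1\<^sub>m (n D)) (Z \<mu>) *\<^sub>v v) $ j = 0" unfolding ZS[OF \<mu>] .
    qed
    show "\<forall>k\<in>Pi_set cyc D. \<forall>i\<in>Rset cyc n r D. v $ (k * MM + i) = 0"
      using Suc.prems(5) unfolding MM_def by auto
  qed
qed

lemma edge_char:
  assumes k1: "k+1 < n \<mu>" and c: "cyc \<mu> \<Longrightarrow> 1 \<le> k" and j: "j < n \<mu>"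
  shows "(k,j) \<in> factor_edges cyc n \<mu> \<longleftrightarrow> j = k+1"
    and "(j,k) \<in> factor_edges cyc n \<mu> \<longleftrightarrow> k = j+1"
proof -
  show "(k,j) \<in> factor_edges cyc n \<mu> \<longleftrightarrow> j = k+1"
    using k1 by (auto simp: factor_edges_def cycle_edges_def path_edges_def)
  show "(j,k) \<in> factor_edges cyc n \<mu> \<longleftrightarrow> k = j+1"
  proof (cases "cyc \<mu>")
    case True
    have "(j,k) \<in> cycle_edges (n \<mu>) \<longleftrightarrow> k = (j+1) mod n \<mu>"
      using j by (auto simp: cycle_edges_def)
    also have "\<dots> \<longleftrightarrow> k = j+1"
    proof (cases "j+1 < n \<mu>")
      case True then show ?thesis by simp
    next
      case False
      then have "j+1 = n \<mu>" using j by simp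
      then show ?thesis using c[OF \<open>cyc \<mu>\<close>] k1 by auto
    qed
    finally show ?thesis using True by (simp add: factor_edges_def)
  next
    case False
    then show ?thesis using k1 by (auto simp: factor_edges_def path_edges_def)
  qed
qed

lemma row_eq:
  assumes k1: "k+1 < n \<mu>" and c: "cyc \<mu> \<Longrightarrow> 1 \<le> k" and w: "w \<in> carrier_vec (n \<mu>)"
  shows "(A_as (n \<mu>) (factor_edges cyc n \<mu>) *\<^sub>v w) $ k = w $ (k+1) - (if 1 \<le> k then w $ (k-1) else 0)"
proof -
  let ?E = "factor_edges cyc n \<mu>"
  have k: "k < n \<mu>" using k1 by simp
  have "(A_as (n \<mu>) ?E *\<^sub>v w) $ k = (\<Sum>j\<in>{0..<n \<mu>}. A_as (n \<mu>) ?E $$ (k,j) * w $ j)"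
    by (rule mv_entry[OF A_as_carrier w k])
  also have "\<dots> = (\<Sum>j\<in>{0..<n \<mu>}. (if j = k+1 then w $ j else 0) + (if 1 \<le> k \<and> j = k - 1 then - w $ j else 0))"
  proof (intro sum.cong refl)
    fix j assume "j \<in> {0..<n \<mu>}"
    then have j: "j < n \<mu>" by simp
    have e1: "(k,j) \<in> ?E \<longleftrightarrow> j = k+1" and e2: "(j,k) \<in> ?E \<longleftrightarrow> k = j+1"
      using edge_char[where k=k and n=n and \<mu>=\<mu> and cyc=cyc and j=j, OF k1 c j] by auto
    have "A_as (n \<mu>) ?E $$ (k,j) = (if j = k+1 then 1 else if k = j+1 then -1 else 0)"
      using j k e1 e2 unfolding A_as_def by simp
    then show "A_as (n \<mu>) ?E $$ (k,j) * w $ j = (if j = k+1 then w $ j else 0) + (if 1 \<le> k \<and> j = k - 1 then - w $ j else 0)"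
      by auto
  qed
  also have "\<dots> = w $ (k+1) - (if 1 \<le> k then w $ (k-1) else 0)"
    using k1 by (simp add: sum.distrib sum.delta) linarith
  finally show ?thesis .
qed

lemma factor_kernel:
  assumes c3: "cyc \<mu> \<Longrightarrow> 3 \<le> n \<mu>" and p2: "\<not> cyc \<mu> \<Longrightarrow> 2 \<le> n \<mu>"
    and w: "w \<in> carrier_vec (n \<mu>)"
    and ker: "\<forall>k<n \<mu>. (A_as (n \<mu>) (factor_edges cyc n \<mu>) *\<^sub>v w) $ k = 0"
    and P: "\<forall>k\<in>Pi_set cyc \<mu>. w $ k = 0"
  shows "\<forall>k<n \<mu>. w $ k = 0"
proof -
  have rec: "w $ (k+1) = w $ (k-1)" if "1 \<le> k" "k+1 < n \<mu>" for k
    using row_eq[where k=k and n=n and \<mu>=\<mu> and cyc=cyc and w=w, OF that(2) _ w] ker that by auto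
  have w0: "w $ 0 = 0" using P by (simp add: Pi_set_def)
  have w1: "w $ 1 = 0"
  proof (cases "cyc \<mu>")
    case True then show ?thesis using P by (simp add: Pi_set_def)
  next
    case False
    have "(A_as (n \<mu>) (factor_edges cyc n \<mu>) *\<^sub>v w) $ 0 = w $ 1"
      using row_eq[where k=0 and n=n and \<mu>=\<mu> and cyc=cyc and w=w] p2 False w by simp
    then show ?thesis using ker p2 False by auto
  qed
  have "w $ k = 0" if "k < n \<mu>" for k
    using that
  proof (induction k rule: less_induct)
    case (less k)
    show ?case
    proof (cases "k < 2")
      case True then show ?thesis using w0 w1 by (cases k) auto
    next
      case False
      have "w $ ((k-1)+1) = w $ ((k-1)-1)" by (rule rec) (use False less.prems in auto)
      moreover have "(k-1)+1 = k" "(k-1)-1 = k-2" using False by auto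
      ultimately have "w $ k = w $ (k-2)" by simp
      also have "\<dots> = 0" using less.IH[of "k-2"] less.prems False by auto
      finally show ?thesis .
    qed
  qed
  then show ?thesis by blast
qed

lemma edges_antisym:
  assumes c3: "cyc \<mu> \<Longrightarrow> 3 \<le> n \<mu>" and e: "(i,j) \<in> factor_edges cyc n \<mu>"
  shows "(j,i) \<notin> factor_edges cyc n \<mu>"
proof (cases "cyc \<mu>")
  case True
  then have n3: "3 \<le> n \<mu>" using c3 by simp
  show ?thesis
  proof
    assume "(j,i) \<in> factor_edges cyc n \<mu>"
    then have "(j,i) \<in> cycle_edges (n \<mu>)" using True by (simp add: factor_edges_def)
    then obtain a where "(j,i) = (a, (a+1) mod n \<mu>)" "a < n \<mu>" unfolding cycle_edges_def by blast
    then have ji: "j < n \<mu>" "i = (j+1) mod n \<mu>" by simp_all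
    have "(i,j) \<in> cycle_edges (n \<mu>)" using e True by (simp add: factor_edges_def)
    then obtain b where "(i,j) = (b, (b+1) mod n \<mu>)" "b < n \<mu>" unfolding cycle_edges_def by blast
    then have ij: "i < n \<mu>" "j = (i+1) mod n \<mu>" by simp_all
    show False
    proof (cases "i+1 < n \<mu>")
      case True
      then have j1: "j = i+1" using ij(2) by (simp only: mod_less)
      show False
      proof (cases "i+2 < n \<mu>")
        case True
        then have "(j+1) mod n \<mu> = i+2" using j1 by (simp only: mod_less Suc_eq_plus1 add.assoc one_add_one)
        then show False using ji(2) by linarith
      next
        case False
        then have jn: "j + 1 = n \<mu>" using j1 ji(1) by linarith
        then have "i = 0" using ji(2) by (simp only: mod_self)
        then show False using jn j1 n3 by linarith
      qed
    next
      case False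
      then have inn: "i+1 = n \<mu>" using ij(1) by linarith
      then have "j = 0" using ij(2) by (simp only: mod_self)
      moreover have "1 < n \<mu>" using n3 by linarith
      ultimately have "i = 1" using ji(2) by (simp only: mod_less add_0)
      then show False using inn n3 by linarith
    qed
  qed
next
  case False
  then have "(i,j) \<in> path_edges (n \<mu>)" using e by (simp add: factor_edges_def)
  then have "j = i+1" unfolding path_edges_def by blast
  moreover have "(j,i) \<in> path_edges (n \<mu>) \<Longrightarrow> i = j+1" unfolding path_edges_def by blast
  ultimately show ?thesis using False by (auto simp: factor_edges_def)
qed

lemma conn_all:
  assumes E: "\<And>i. i+1 < m \<Longrightarrow> (i,i+1) \<in> E" and x: "x < m" and y: "y < m"
  shows "(x,y) \<in> conn_rel m E"
proof -
  have fw: "(0,i) \<in> (E \<union> E\<inverse>)\<^sup>*" if "i < m" for i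
    using that
  proof (induction i)
    case 0 then show ?case by simp
  next
    case (Suc i)
    then have "(i, Suc i) \<in> E \<union> E\<inverse>" using E[of i] by simp
    then show ?case using Suc by (meson Suc_lessD rtrancl_into_rtrancl)
  qed
  have bw: "(i,0) \<in> (E \<union> E\<inverse>)\<^sup>*" if "i < m" for i
    using that
  proof (induction i)
    case 0 then show ?case by simp
  next
    case (Suc i)
    then have "(Suc i, i) \<in> E \<union> E\<inverse>" using E[of i] by simp
    then show ?case using Suc by (meson Suc_lessD converse_rtrancl_into_rtrancl)
  qed
  have "(x,y) \<in> (E \<union> E\<inverse>)\<^sup>*" using bw[OF x] fw[OF y] by (rule rtrancl_trans)
  then show ?thesis unfolding conn_rel_def using x y by simp
qed

lemma beta0_one:
  assumes E: "\<And>i. i+1 < m \<Longrightarrow> (i,i+1) \<in> E" and m: "1 \<le> m"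
  shows "beta0 m E = 1"
proof -
  have img: "conn_rel m E `` {x} = {0..<m}" if x: "x < m" for x
  proof
    show "conn_rel m E `` {x} \<subseteq> {0..<m}" unfolding conn_rel_def by auto
    show "{0..<m} \<subseteq> conn_rel m E `` {x}" using conn_all[OF E x] by auto
  qed
  have "{0..<m} // conn_rel m E = {{0..<m}}"
    unfolding quotient_def using img m by auto
  then show ?thesis unfolding beta0_def by simp
qed

lemma factor_edge_step: "i+1 < n \<mu> \<Longrightarrow> (i,i+1) \<in> factor_edges cyc n \<mu>"
  by (auto simp: factor_edges_def cycle_edges_def path_edges_def)

lemma card_path_edges: "card (path_edges m) = m - 1"
proof -
  have "path_edges m = (\<lambda>i. (i, i+1)) ` {..<m-1}"
    unfolding path_edges_def by auto
  moreover have "inj_on (\<lambda>i. (i, i+1::nat)) {..<m-1}" by (auto simp: inj_on_def)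
  ultimately show ?thesis by (simp add: card_image)
qed

lemma card_cycle_edges: "card (cycle_edges m) = m"
proof -
  have "cycle_edges m = (\<lambda>i. (i, (i+1) mod m)) ` {..<m}"
    unfolding cycle_edges_def by auto
  moreover have "inj_on (\<lambda>i. (i, (i+1) mod m)) {..<m}" by (auto simp: inj_on_def)
  ultimately show ?thesis by (simp add: card_image)
qed

lemma beta_factor:
  assumes c3: "cyc \<mu> \<Longrightarrow> 3 \<le> n \<mu>" and p2: "\<not> cyc \<mu> \<Longrightarrow> 2 \<le> n \<mu>"
  shows "int (beta0 (n \<mu>) (factor_edges cyc n \<mu>)) + beta1 (n \<mu>) (factor_edges cyc n \<mu>) = (if cyc \<mu> then 2 else 1)"
proof -
  have n1: "1 \<le> n \<mu>" using c3 p2 by (cases "cyc \<mu>") auto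
  have b0: "beta0 (n \<mu>) (factor_edges cyc n \<mu>) = 1"
    by (rule beta0_one[OF factor_edge_step n1])
  show ?thesis
  proof (cases "cyc \<mu>")
    case True
    then show ?thesis unfolding beta1_def b0 by (simp add: factor_edges_def card_cycle_edges)
  next
    case False
    then show ?thesis unfolding beta1_def b0 using n1 by (simp add: factor_edges_def card_path_edges of_nat_diff)
  qed
qed

lemma prod_beta:
  assumes c3: "\<And>\<mu>. \<mu> < D \<Longrightarrow> cyc \<mu> \<Longrightarrow> 3 \<le> n \<mu>" and p2: "\<And>\<mu>. \<mu> < D \<Longrightarrow> \<not> cyc \<mu> \<Longrightarrow> 2 \<le> n \<mu>"
  shows "(\<Prod>\<mu><D. int (beta0 (n \<mu>) (factor_edges cyc n \<mu>)) + beta1 (n \<mu>) (factor_edges cyc n \<mu>))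
         = 2 ^ card {\<mu>\<in>{0..<D}. cyc \<mu>}"
proof -
  have "(\<Prod>\<mu><D. int (beta0 (n \<mu>) (factor_edges cyc n \<mu>)) + beta1 (n \<mu>) (factor_edges cyc n \<mu>))
      = (\<Prod>\<mu><D. if cyc \<mu> then 2 else 1)"
    by (intro prod.cong refl beta_factor) (use c3 p2 in auto)
  also have "\<dots> = 2 ^ card {\<mu>\<in>{0..<D}. cyc \<mu>}"
  proof (induction D)
    case 0 then show ?case by simp
  next
    case (Suc D)
    have "(\<Prod>\<mu><Suc D. if cyc \<mu> then 2 else 1) = (\<Prod>\<mu><D. if cyc \<mu> then 2 else 1) * (if cyc D then 2 else (1::int))"
      by simp
    also have "\<dots> = 2 ^ card {\<mu>\<in>{0..<D}. cyc \<mu>} * (if cyc D then 2 else 1)" unfolding Suc.IH ..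
    also have "\<dots> = 2 ^ card {\<mu>\<in>{0..<Suc D}. cyc \<mu>}"
      unfolding card_cyc_Suc by (simp add: power_add)
    finally show ?case .
  qed
  finally show ?thesis .
qed

context vec_space
begin

lemma rank_mult_le:
  assumes A: "A \<in> carrier_mat n k" and B: "B \<in> carrier_mat k nc"
  shows "rank (A * B) \<le> rank A"
proof -
  define W where "W = span (set (cols A))"
  have cA: "set (cols A) \<subseteq> carrier_vec n" using A cols_dim by blast
  have sub: "set (cols (A * B)) \<subseteq> W"
  proof
    fix x assume "x \<in> set (cols (A * B))"
    then obtain j where j: "j < dim_col (A*B)" and x: "x = col (A*B) j"
      by (metis cols_length cols_nth in_set_conv_nth)
    have j': "j < nc" using j B by simp
    have "x = A *\<^sub>v col B j" using x col_mult2[OF A B j'] by simp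
    moreover have "col B j \<in> carrier_vec k" using B j' by simp
    ultimately have "x \<in> col_space A" using col_space_eq[OF A] A by auto
    then show "x \<in> W" unfolding W_def col_space_def .
  qed
  have vsW: "vectorspace class_ring (vs W)" unfolding W_def
    using span_is_subspace[THEN subspace_is_vs, OF cA] by auto
  have smW: "submodule class_ring W V" unfolding W_def using cA by (simp add: span_is_submodule)
  have ss: "subspace class_ring (span (set (cols (A*B)))) (vs W)"
    using vectorspace.span_is_subspace[OF vsW, of "set (cols (A*B))", unfolded
      span_li_not_depend(1)[OF sub smW]] sub by auto
  have fd1: "vectorspace.fin_dim class_ring (vs W)"
    unfolding W_def by (rule fin_dim_span_cols[OF A])
  have fd2: "vectorspace.fin_dim class_ring (vs (span (set (cols (A*B)))))"
    by (rule fin_dim_span_cols[OF mult_carrier_mat[OF A B]])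
  have fin_dim: "vectorspace.fin_dim class_ring (vs W)"
       "vectorspace.fin_dim class_ring (vs W\<lparr>carrier := span (set (cols (A*B)))\<rparr>)"
    using fd1 fd2 by auto
  have "rank (A*B) \<le> vectorspace.dim class_ring (vs W)"
    unfolding rank_def using vectorspace.subspace_dim[OF vsW ss fin_dim(1) fin_dim(2)] by simp
  then show ?thesis unfolding rank_def W_def .
qed

lemma rank_diag_le:
  assumes "finite R" "R \<subseteq> {0..<n}"
  shows "rank (mat n n (\<lambda>(a,b). if a = b \<and> a \<in> R then (-1::'a) else 0)) \<le> card R"
  using assms
proof (induction R rule: finite_induct)
  case empty
  have eq0: "mat n n (\<lambda>(a,b). if a = b \<and> a \<in> {} then (-1::'a) else 0) = 0\<^sub>m n n"
    by (rule eq_matI) auto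
  show ?case unfolding eq0 rank_0I by simp
next
  case (insert j R)
  define E where "E = mat n n (\<lambda>(a,b). if a = j \<and> b = j then (-1::'a) else 0)"
  define P where "P = mat n n (\<lambda>(a,b). if a = b \<and> a \<in> R then (-1::'a) else 0)"
  have eq: "mat n n (\<lambda>(a,b). if a = b \<and> a \<in> insert j R then (-1::'a) else 0) = E + P"
    unfolding E_def P_def by (rule eq_matI) (use insert.hyps in auto)
  have E: "E \<in> carrier_mat n n" and P: "P \<in> carrier_mat n n" unfolding E_def P_def by auto
  have rE: "rank E \<le> 1"
    by (rule rank_le_1_product_entries[OF E, of "\<lambda>a. if a = j then -1 else 0" "\<lambda>b. if b = j then 1 else 0"])
       (auto simp: E_def)
  have rP: "rank P \<le> card R" unfolding P_def using insert by simp
  have "rank (E + P) \<le> rank E + rank P" by (rule rank_subadditive[OF E P])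
  then show ?case unfolding eq using rE rP insert.hyps by simp
qed

end

theorem theorem6:
  fixes D d r :: nat and cyc :: "nat \<Rightarrow> bool" and n :: "nat \<Rightarrow> nat"
    and \<gamma> :: "nat \<Rightarrow> complex mat"
  assumes "D \<ge> 1" and "d \<le> D"
    and "card {\<mu>\<in>{0..<D}. cyc \<mu>} = d"
    and "\<And>\<mu>. \<mu> < D \<Longrightarrow> cyc \<mu> \<Longrightarrow> n \<mu> \<ge> 3"
    and "\<And>\<mu>. \<mu> < D \<Longrightarrow> \<not> cyc \<mu> \<Longrightarrow> n \<mu> \<ge> 2"
    and "\<And>\<mu>. \<mu> < D \<Longrightarrow> \<gamma> \<mu> \<in> carrier_mat r r"
    and "\<And>\<mu> \<nu>. \<mu> < D \<Longrightarrow> \<nu> < D \<Longrightarrow>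
           \<gamma> \<mu> * \<gamma> \<nu> + \<gamma> \<nu> * \<gamma> \<mu> = (if \<mu> = \<nu> then 2 else 0) \<cdot>\<^sub>m 1\<^sub>m r"
  shows "int ((\<Prod>\<mu><D. n \<mu>) * r) - int (vec_space.rank ((\<Prod>\<mu><D. n \<mu>) * r) (dirac D cyc n r \<gamma>))
           \<le> int r * (\<Prod>\<mu><D. int (beta0 (n \<mu>) (factor_edges cyc n \<mu>)) + beta1 (n \<mu>) (factor_edges cyc n \<mu>))
       \<and> int r * (\<Prod>\<mu><D. int (beta0 (n \<mu>) (factor_edges cyc n \<mu>)) + beta1 (n \<mu>) (factor_edges cyc n \<mu>))
           = int r * 2 ^ d"
proof -
  define N where "N = (\<Prod>\<mu><D. n \<mu>)"
  define m where "m = N * r"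
  define Dm where "Dm = dirac D cyc n r \<gamma>"
  define R where "R = Rset cyc n r D"
  define Pm where "Pm = mat m m (\<lambda>(a,b). if a = b \<and> a \<in> R then (-1::complex) else 0)"
  define L where "L = (\<lambda>\<mu>. kron (Xm cyc n D \<mu>) (1\<^sub>m r))"
  have c3: "\<And>\<mu>. \<mu> < D \<Longrightarrow> cyc \<mu> \<Longrightarrow> 3 \<le> n \<mu>" using assms(4) by simp
  have p2: "\<And>\<mu>. \<mu> < D \<Longrightarrow> \<not> cyc \<mu> \<Longrightarrow> 2 \<le> n \<mu>" using assms(5) by simp
  have n2: "\<And>\<mu>. \<mu> < D \<Longrightarrow> 2 \<le> n \<mu>" using c3 p2 by (metis le_trans numeral_le_iff semiring_norm(69) semiring_norm(72) le_refl)
  have beta: "(\<Prod>\<mu><D. int (beta0 (n \<mu>) (factor_edges cyc n \<mu>)) + beta1 (n \<mu>) (factor_edges cyc n \<mu>)) = 2 ^ d"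
    using prod_beta[OF c3 p2] assms(3) by simp
  have Rsub: "R \<subseteq> {0..<m}" unfolding R_def m_def N_def by (rule Rset_sub[OF n2])
  have fR: "finite R" unfolding R_def by (rule finite_Rset)
  have cR: "card R \<le> r * 2 ^ d" unfolding R_def using Rset_card[of cyc n r D] assms(3) by simp
  have Dm_eq: "Dm = mat m m (\<lambda>ij. \<Sum>\<mu><D. kron (Xm cyc n D \<mu>) (\<gamma> \<mu>) $$ ij)"
    unfolding Dm_def m_def N_def by (rule dirac_Xm)
  have Dm_c: "Dm \<in> carrier_mat m m" unfolding Dm_eq by simp
  have Pm_c: "Pm \<in> carrier_mat m m" unfolding Pm_def by simp
  have Xc: "\<And>\<mu>. \<mu> < D \<Longrightarrow> Xm cyc n D \<mu> \<in> carrier_mat N N" unfolding N_def by (rule Xm_carrier)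
  have Lc: "\<And>\<mu>. \<mu> < D \<Longrightarrow> L \<mu> \<in> carrier_mat m m"
    unfolding L_def m_def using Xc kron_carrier one_carrier_mat by blast
  have Lsk: "\<And>\<mu>. \<mu> < D \<Longrightarrow> skew (L \<mu>)"
    unfolding L_def by (rule skew_Xm) (use edges_antisym c3 in blast)+
  have inj: "v = 0\<^sub>v m" if v: "v \<in> carrier_vec m" and h: "(Dm * Dm + Pm) *\<^sub>v v = 0\<^sub>v m" for v
  proof -
    have hi: "(\<Sum>\<mu><D. (L \<mu> *\<^sub>v (L \<mu> *\<^sub>v v)) $ i) - (if i \<in> R then v $ i else 0) = 0" if i: "i < m" for i
    proof -
      have "(Dm * Dm + Pm) *\<^sub>v v = Dm *\<^sub>v (Dm *\<^sub>v v) + Pm *\<^sub>v v"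
        using Dm_c Pm_c v by (simp add: add_mult_distrib_mat_vec[of _ m m] assoc_mult_mat_vec[of _ m m])
      then have "(Dm *\<^sub>v (Dm *\<^sub>v v)) $ i + (Pm *\<^sub>v v) $ i = 0"
        using h i Dm_c Pm_c by (metis index_add_vec(1) index_zero_vec(1) dim_mult_mat_vec carrier_matD(1))
      moreover have "(Dm *\<^sub>v (Dm *\<^sub>v v)) $ i = (\<Sum>\<mu><D. (L \<mu> *\<^sub>v (L \<mu> *\<^sub>v v)) $ i)"
        unfolding Dm_eq L_def m_def
        by (rule clifford_sq[OF Xc assms(6) Xm_comm assms(7)]) (use v i m_def in simp_all)
      moreover have "(Pm *\<^sub>v v) $ i = - (if i \<in> R then v $ i else 0)"
      proof -
        have "(Pm *\<^sub>v v) $ i = (\<Sum>j\<in>{0..<m}. Pm $$ (i,j) * v $ j)" by (rule mv_entry[OF Pm_c v i])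
        also have "\<dots> = (\<Sum>j\<in>{0..<m}. if j = i then (if i \<in> R then - v $ i else 0) else 0)"
          using i by (intro sum.cong refl) (auto simp: Pm_def)
        also have "\<dots> = - (if i \<in> R then v $ i else 0)" using i by simp
        finally show ?thesis .
      qed
      ultimately show ?thesis by simp
    qed
    have ker: "\<forall>\<mu><D. \<forall>k<m. (L \<mu> *\<^sub>v v) $ k = 0" and RV: "\<forall>j\<in>R. v $ j = 0"
      using kernel_extract[OF Lc Lsk v Rsub hi] by blast+
    have "\<forall>j<(\<Prod>\<nu><D. n \<nu>) * r. v $ j = 0"
    proof (rule kernel_induct[OF n2])
      show "\<And>\<mu> w. \<mu> < D \<Longrightarrow> w \<in> carrier_vec (n \<mu>) \<Longrightarrow>
          \<forall>k<n \<mu>. (A_as (n \<mu>) (factor_edges cyc n \<mu>) *\<^sub>v w) $ k = 0 \<Longrightarrow>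
          \<forall>k\<in>Pi_set cyc \<mu>. w $ k = 0 \<Longrightarrow> \<forall>k<n \<mu>. w $ k = 0"
        by (rule factor_kernel) (use c3 p2 in auto)
      show "v \<in> carrier_vec ((\<Prod>\<nu><D. n \<nu>) * r)" using v unfolding m_def N_def .
      show "\<forall>\<mu><D. \<forall>k<(\<Prod>\<nu><D. n \<nu>) * r. (kron (Xm cyc n D \<mu>) (1\<^sub>m r) *\<^sub>v v) $ k = 0"
        using ker unfolding L_def m_def N_def .
      show "\<forall>j\<in>Rset cyc n r D. v $ j = 0" using RV unfolding R_def .
    qed
    then show "v = 0\<^sub>v m" using v unfolding m_def N_def by (intro eq_vecI) auto
  qed
  have M_c: "Dm * Dm + Pm \<in> carrier_mat m m" using Dm_c Pm_c by simp
  have "det (Dm * Dm + Pm) \<noteq> 0"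
    using det_0_iff_vec_prod_zero[OF M_c] inj by blast
  then have rM: "vec_space.rank m (Dm * Dm + Pm) = m"
    using vec_space.det_rank_iff[OF M_c] by blast
  have "vec_space.rank m (Dm * Dm + Pm) \<le> vec_space.rank m (Dm * Dm) + vec_space.rank m Pm"
    by (rule vec_space.rank_subadditive[OF mult_carrier_mat[OF Dm_c Dm_c] Pm_c])
  also have "vec_space.rank m (Dm * Dm) \<le> vec_space.rank m Dm"
    by (rule vec_space.rank_mult_le[OF Dm_c Dm_c])
  also have "vec_space.rank m Pm \<le> card R"
    unfolding Pm_def by (rule vec_space.rank_diag_le[OF fR Rsub])
  finally have "m \<le> vec_space.rank m Dm + card R" using rM by simp
  then have a: "int m \<le> int (vec_space.rank m Dm) + int (card R)" by linarith
  have b: "int (card R) \<le> int r * 2 ^ d"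
    using cR by (metis of_nat_le_iff of_nat_mult of_nat_power of_nat_numeral)
  have "int m - int (vec_space.rank m Dm) \<le> int r * 2 ^ d" using a b by linarith
  then show ?thesis unfolding beta m_def N_def Dm_def by simp
qed

end
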